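(* The category $\mathbf{DRC}$ of DRC-semigroups (with DRC-morphisms) is isomorphic to the category $\mathbf{CPC}$ of chained projection categories (with chained projection functors).
   Context: \textbf{DRC-semigroups.} A DRC-semigroup is an algebra $(S,\cdot,D,R)$ where $(S,\cdot)$ is a semigroup and $D,R:S\to S$ are unary operations satisfying, for all $a,b\in S$: $D(a)a=a$, $aR(a)=a$; $D(ab)=D(aD(b))$, $R(ab)=R(R(a)b)$; $D(ab)=D(a)D(ab)D(a)$, $R(ab)=R(b)R(ab)R(b)$; $R(D(a))=D(a)$, $D(R(a))=R(a)$. A DRC-morphism is a map preserving $\cdot$, $D$ and $R$; $\mathbf{DRC}$ is the category of DRC-semigroups and DRC-morphisms. \textbf{Projection algebras.} Maps are written to the right of their arguments and composed left to right ($p\,\alpha\beta=(p\alpha)\beta$). A projection algebra is a set $P$ with two families of maps $\theta_p,\delta_p:P\to P$ ($p\in P$) such that for all $p,q\in P$: $p\theta_p=p$, $p\delta_p=p$; $p\theta_{q\theta_p}=q\theta_p$, $p\delta_{q\delta_p}=q\delta_p$; $\theta_q\theta_{q\theta_p}=\theta_q\theta_p$, $\delta_q\delta_{q\delta_p}=\delta_q\delta_p$; $\theta_p\delta_p=\theta_p$, $\delta_p\theta_p=\delta_p$; $\theta_{p\delta_q}\theta_p=\theta_q\theta_p$, $\delta_{p\theta_q}\delta_p=\delta_q\delta_p$. It is partially ordered by $p\le q\iff p=p\theta_q$ (equivalently $p=p\delta_q$). Write $p\,\mathscr F\,q$ iff $p=q\delta_p$ and $q=p\theta_q$. A projection algebra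 morphism $\phi:P\to P'$ satisfies $(q\theta_p)\phi=(q\phi)\theta'_{p\phi}$ and $(q\delta_p)\phi=(q\phi)\delta'_{p\phi}$. \textbf{Biordered categories.} A small category $\mathcal C$ is identified with its set of morphisms; objects are identified with identity morphisms, forming $v\mathcal C$; $\mathbf d,\mathbf r:\mathcal C\to v\mathcal C$ are domain and codomain, and $a\circ b$ is defined iff $\mathbf r(a)=\mathbf d(b)$ (composition left to right). A left-ordered category is $(\mathcal C,\le)$ with a partial order such that: $a\le b$ implies $\mathbf d(a)\le\mathbf d(b)$ and $\mathbf r(a)\le \mathbf r(b)$; if $a\le b$, $c\le c'$, $\mathbf r(a)=\mathbf d(c)$, $\mathbf r(b)=\mathbf d(c')$ then $a\circ c\le b\circ c'$; for every object $p\le\mathbf d(a)$ there is a unique $u\le a$ with $\mathbf d(u)=p$, written ${}_p\lfloor a$ (left restriction). A right-ordered category is defined dually, with unique $v\le a$ having $\mathbf r(v)=q$ for each object $q\le\mathbf r(a)$, written $a\rfloor_q$. A biordered category is $(\mathcal C,\le_l,\le_r)$ with $(\mathcal C,\le_l)$ left-ordered, $(\mathcal C,\le_r)$ right-ordered, and $\le_l,\le_r$ agreeing on $v\mathcal C$. A biordered morphism is a functor preserving both orders. Write $\mathcal C(q,r)=\{a:\mathbf d(a)=q,\mathbf r(a)=r\}$ and $t^{\downarrow}=\{s:s\le t\}$. \textbf{Projection categories.} A weak projection category is a pair $(P,\mathcal C)$ with $\mathcal C$ biordered, $P=v\mathcal C$ a projection algebra, and both $\le_l,\le_r$ restricting on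 $P$ to the projection algebra order. For $a\in\mathcal C$ define $\vartheta_a:\mathbf d(a)^\downarrow\to\mathbf r(a)^\downarrow$, $p\vartheta_a=\mathbf r({}_p\lfloor a)$, and $\vartheta'_a:\mathbf r(a)^\downarrow\to\mathbf d(a)^\downarrow$, $q\vartheta'_a=\mathbf d(a\rfloor_q)$; and $\Theta_a=\theta_{\mathbf d(a)}\vartheta_a:P\to P$, $\Delta_a=\delta_{\mathbf r(a)}\vartheta'_a:P\to P$. A projection category is a weak projection category such that (C1) for all $a\in\mathcal C$, $p\le\mathbf d(a)$, $q\le\mathbf r(a)$: $\Theta_{a\rfloor_q}=\Theta_a\theta_q$ and $\Delta_{{}_p\lfloor a}=\Delta_a\delta_p$. \textbf{Chain category.} For a projection algebra $P$, a path is a tuple $(p_1,\dots,p_k)$, $k\ge1$, with $p_1\,\mathscr F\,p_2\,\mathscr F\cdots\mathscr F\,p_k$; $\mathbf d=p_1$, $\mathbf r=p_k$, composition $(p_1,\dots,p_k)\circ(p_k,\dots,p_l)=(p_1,\dots,p_l)$, objects $(p)\equiv p$. Restrictions: for $q\le p_1$, ${}_q\lfloor(p_1,\dots,p_k)=(q_1,\dots,q_k)$ with $q_1=q$, $q_i=q_{i-1}\theta_{p_i}$; for $r\le p_k$, $(p_1,\dots,p_k)\rfloor_r=(r_1,\dots,r_k)$ with $r_k=r$, $r_i=r_{i+1}\delta_{p_i}$. These make the path category biordered (with $\mathbf x\le_l\mathbf y\iff \mathbf x={}_{\mathbf d(\mathbf x)}\lfloor\mathbf y$, $\mathbf x\le_r\mathbf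 y\iff\mathbf x=\mathbf y\rfloor_{\mathbf r(\mathbf x)}$). The chain category $\mathcal C(P)$ is its quotient by the congruence generated by $(p,p)\approx(p)$ for $p\in P$; it is biordered with restrictions computed on representatives; its elements are written $[p_1,\dots,p_k]$ and $v\mathcal C(P)=P$. \textbf{Chained projection categories.} An evaluation map for a projection category $(P,\mathcal C)$ is a biordered morphism (functor) $\varepsilon:\mathcal C(P)\to\mathcal C$ with $\varepsilon[p]=p$ for all $p\in P$. For $b\in\mathcal C(q,r)$ and $p,s\in P$ put $e=s\Delta_b\delta_p$, $e_1=s\Delta_b\delta_{p\theta_q}$, $e_2=p\theta_{s\Delta_b}$, $f=p\Theta_b\theta_s$, $f_1=s\delta_{p\Theta_b}$, $f_2=p\Theta_b\theta_{s\delta_r}$; then $e\,\mathscr F\,e_1$, $e\,\mathscr F\,e_2$, $f_1\,\mathscr F\,f$, $f_2\,\mathscr F\,f$ and the following morphisms are defined: $\lambda(p,b,s)=\varepsilon[e,e_1]\circ({}_{p\theta_q}\lfloor b)\rfloor_{f_1}\circ\varepsilon[f_1,f]$ and $\rho(p,b,s)=\varepsilon[e,e_2]\circ{}_{e_2}\lfloor(b\rfloor_{s\delta_r})\circ\varepsilon[f_2,f]$. A chained projection category is a triple $(P,\mathcal C,\varepsilon)$ with $(P,\mathcal C)$ a projection category, $\varepsilon$ an evaluation map, and (C2) $\lambda(p,b,s)=\rho(p,b,s)$ for all $b\in\mathcal C$, $p,s\in P$. A chained projection functor $(P,\mathcal C,\varepsilon)\to(P',\mathcal C',\varepsilon')$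 is a biordered morphism $\phi:\mathcal C\to\mathcal C'$ whose restriction to objects is a projection algebra morphism $P\to P'$ and with $(\varepsilon[p_1,\dots,p_k])\phi=\varepsilon'[p_1\phi,\dots,p_k\phi]$. $\mathbf{CPC}$ is the category of chained projection categories and chained projection functors. *)

theory Defs
  imports Main "HOL-Library.FuncSet"
begin

text \<open>A category is presented by a predicate of objects, hom-sets, identities and
  composition; comp X Y Z g f is the composite of f : X -> Y followed by g : Y -> Z.\<close>

definition is_functor ::
  "('o1 \<Rightarrow> bool) \<Rightarrow> ('o1 \<Rightarrow> 'o1 \<Rightarrow> 'm1 set) \<Rightarrow> ('o1 \<Rightarrow> 'm1) \<Rightarrow>
   ('o1 \<Rightarrow> 'o1 \<Rightarrow> 'o1 \<Rightarrow> 'm1 \<Rightarrow> 'm1 \<Rightarrow> 'm1) \<Rightarrow>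
   ('o2 \<Rightarrow> bool) \<Rightarrow> ('o2 \<Rightarrow> 'o2 \<Rightarrow> 'm2 set) \<Rightarrow> ('o2 \<Rightarrow> 'm2) \<Rightarrow>
   ('o2 \<Rightarrow> 'o2 \<Rightarrow> 'o2 \<Rightarrow> 'm2 \<Rightarrow> 'm2 \<Rightarrow> 'm2) \<Rightarrow>
   ('o1 \<Rightarrow> 'o2) \<Rightarrow> ('o1 \<Rightarrow> 'o1 \<Rightarrow> 'm1 \<Rightarrow> 'm2) \<Rightarrow> bool" where
  "is_functor ob1 hom1 id1 comp1 ob2 hom2 id2 comp2 Fo Fm \<longleftrightarrow>
     (\<forall>X. ob1 X \<longrightarrow> ob2 (Fo X)) \<and>
     (\<forall>X Y f. ob1 X \<and> ob1 Y \<and> f \<in> hom1 X Y \<longrightarrow> Fm X Y f \<in> hom2 (Fo X) (Fo Y)) \<and>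
     (\<forall>X. ob1 X \<longrightarrow> Fm X X (id1 X) = id2 (Fo X)) \<and>
     (\<forall>X Y Z f g. ob1 X \<and> ob1 Y \<and> ob1 Z \<and> f \<in> hom1 X Y \<and> g \<in> hom1 Y Z \<longrightarrow>
        Fm X Z (comp1 X Y Z g f) = comp2 (Fo X) (Fo Y) (Fo Z) (Fm Y Z g) (Fm X Y f))"

definition isomorphic_categories ::
  "('o1 \<Rightarrow> bool) \<Rightarrow> ('o1 \<Rightarrow> 'o1 \<Rightarrow> 'm1 set) \<Rightarrow> ('o1 \<Rightarrow> 'm1) \<Rightarrow>
   ('o1 \<Rightarrow> 'o1 \<Rightarrow> 'o1 \<Rightarrow> 'm1 \<Rightarrow> 'm1 \<Rightarrow> 'm1) \<Rightarrow>
   ('o2 \<Rightarrow> bool) \<Rightarrow> ('o2 \<Rightarrow> 'o2 \<Rightarrow> 'm2 set) \<Rightarrow> ('o2 \<Rightarrow> 'm2) \<Rightarrow>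
   ('o2 \<Rightarrow> 'o2 \<Rightarrow> 'o2 \<Rightarrow> 'm2 \<Rightarrow> 'm2 \<Rightarrow> 'm2) \<Rightarrow> bool" where
  "isomorphic_categories ob1 hom1 id1 comp1 ob2 hom2 id2 comp2 \<longleftrightarrow>
     (\<exists>Fo Fm Go Gm.
        is_functor ob1 hom1 id1 comp1 ob2 hom2 id2 comp2 Fo Fm \<and>
        is_functor ob2 hom2 id2 comp2 ob1 hom1 id1 comp1 Go Gm \<and>
        (\<forall>X. ob1 X \<longrightarrow> Go (Fo X) = X) \<and>
        (\<forall>X. ob2 X \<longrightarrow> Fo (Go X) = X) \<and>
        (\<forall>X Y f. ob1 X \<and> ob1 Y \<and> f \<in> hom1 X Y \<longrightarrow> Gm (Fo X) (Fo Y) (Fm X Y f) = f) \<and>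
        (\<forall>X Y f. ob2 X \<and> ob2 Y \<and> f \<in> hom2 X Y \<longrightarrow> Fm (Go X) (Go Y) (Gm X Y f) = f))"

text \<open>Carrier-based presentation; operations are normalised to undefined outside the
  carrier so that structures are determined by their data on the carrier.\<close>

record 'a drc =
  drc_carrier :: "'a set"
  drc_mult :: "'a \<Rightarrow> 'a \<Rightarrow> 'a"
  drc_D :: "'a \<Rightarrow> 'a"
  drc_R :: "'a \<Rightarrow> 'a"

definition is_drc :: "'a drc \<Rightarrow> bool" where
  "is_drc S \<longleftrightarrow>
     (let A = drc_carrier S; m = drc_mult S; D = drc_D S; R = drc_R S in
       (\<forall>a\<in>A. \<forall>b\<in>A. m a b \<in> A) \<and> (\<forall>a\<in>A. D a \<in> A \<and> R a \<in> A) \<and>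
       (\<forall>a\<in>A. \<forall>b\<in>A. \<forall>c\<in>A. m (m a b) c = m a (m b c)) \<and>
       (\<forall>a\<in>A. m (D a) a = a \<and> m a (R a) = a) \<and>
       (\<forall>a\<in>A. \<forall>b\<in>A. D (m a b) = D (m a (D b)) \<and> R (m a b) = R (m (R a) b)) \<and>
       (\<forall>a\<in>A. \<forall>b\<in>A. D (m a b) = m (m (D a) (D (m a b))) (D a) \<and>
                       R (m a b) = m (m (R b) (R (m a b))) (R b)) \<and>
       (\<forall>a\<in>A. R (D a) = D a \<and> D (R a) = R a) \<and>
       (\<forall>a b. a \<notin> A \<or> b \<notin> A \<longrightarrow> m a b = undefined) \<and>
       (\<forall>a. a \<notin> A \<longrightarrow> D a = undefined \<and> R a = undefined))"

definition drc_hom :: "'a drc \<Rightarrow> 'a drc \<Rightarrow> ('a \<Rightarrow> 'a) set" where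
  "drc_hom S T = {f. f \<in> drc_carrier S \<rightarrow>\<^sub>E drc_carrier T \<and>
      (\<forall>a\<in>drc_carrier S. \<forall>b\<in>drc_carrier S. f (drc_mult S a b) = drc_mult T (f a) (f b)) \<and>
      (\<forall>a\<in>drc_carrier S. f (drc_D S a) = drc_D T (f a) \<and> f (drc_R S a) = drc_R T (f a))}"

definition drc_id :: "'a drc \<Rightarrow> 'a \<Rightarrow> 'a" where
  "drc_id S = (\<lambda>x\<in>drc_carrier S. x)"

definition drc_comp :: "'a drc \<Rightarrow> 'a drc \<Rightarrow> 'a drc \<Rightarrow> ('a \<Rightarrow> 'a) \<Rightarrow> ('a \<Rightarrow> 'a) \<Rightarrow> 'a \<Rightarrow> 'a" where
  "drc_comp S T U g f = compose (drc_carrier S) g f"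

text \<open>th p q stands for q theta_p and de p q for q delta_p.\<close>

definition proj_le :: "('a \<Rightarrow> 'a \<Rightarrow> 'a) \<Rightarrow> 'a \<Rightarrow> 'a \<Rightarrow> bool" where
  "proj_le th p q \<longleftrightarrow> p = th q p"

definition proj_F :: "('a \<Rightarrow> 'a \<Rightarrow> 'a) \<Rightarrow> ('a \<Rightarrow> 'a \<Rightarrow> 'a) \<Rightarrow> 'a \<Rightarrow> 'a \<Rightarrow> bool" where
  "proj_F th de p q \<longleftrightarrow> p = de p q \<and> q = th q p"

definition projection_algebra :: "'a set \<Rightarrow> ('a \<Rightarrow> 'a \<Rightarrow> 'a) \<Rightarrow> ('a \<Rightarrow> 'a \<Rightarrow> 'a) \<Rightarrow> bool" where
  "projection_algebra P th de \<longleftrightarrow>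
     (\<forall>p\<in>P. \<forall>q\<in>P. th p q \<in> P \<and> de p q \<in> P) \<and>
     (\<forall>p\<in>P. th p p = p \<and> de p p = p) \<and>
     (\<forall>p\<in>P. \<forall>q\<in>P. th (th p q) p = th p q \<and> de (de p q) p = de p q) \<and>
     (\<forall>p\<in>P. \<forall>q\<in>P. \<forall>x\<in>P. th (th p q) (th q x) = th p (th q x) \<and>
                            de (de p q) (de q x) = de p (de q x)) \<and>
     (\<forall>p\<in>P. \<forall>x\<in>P. de p (th p x) = th p x \<and> th p (de p x) = de p x) \<and>
     (\<forall>p\<in>P. \<forall>q\<in>P. \<forall>x\<in>P. th p (th (de q p) x) = th p (th q x) \<and>
                            de p (de (th q p) x) = de p (de q x))"

text \<open>Morphisms of the category are elements of cpc_mor; objects are identified with identity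
  morphisms (the image of the domain map); composition cpc_comp a b is a then b
  (defined when cod a = dom b).\<close>

record 'a cpc =
  cpc_mor :: "'a set"
  cpc_dom :: "'a \<Rightarrow> 'a"
  cpc_cod :: "'a \<Rightarrow> 'a"
  cpc_comp :: "'a \<Rightarrow> 'a \<Rightarrow> 'a"
  cpc_lel :: "'a \<Rightarrow> 'a \<Rightarrow> bool"
  cpc_ler :: "'a \<Rightarrow> 'a \<Rightarrow> bool"
  cpc_theta :: "'a \<Rightarrow> 'a \<Rightarrow> 'a"
  cpc_delta :: "'a \<Rightarrow> 'a \<Rightarrow> 'a"
  cpc_eps :: "'a list \<Rightarrow> 'a"

definition cpc_obj :: "'a cpc \<Rightarrow> 'a set" where
  "cpc_obj C = cpc_dom C ` cpc_mor C"

definition small_category :: "'a cpc \<Rightarrow> bool" where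
  "small_category C \<longleftrightarrow>
     (let M = cpc_mor C; d = cpc_dom C; r = cpc_cod C; c = cpc_comp C in
       (\<forall>a\<in>M. d a \<in> M \<and> r a \<in> M) \<and>
       (\<forall>a\<in>M. d (d a) = d a \<and> r (d a) = d a \<and> d (r a) = r a \<and> r (r a) = r a) \<and>
       (\<forall>a\<in>M. \<forall>b\<in>M. r a = d b \<longrightarrow> c a b \<in> M \<and> d (c a b) = d a \<and> r (c a b) = r b) \<and>
       (\<forall>a\<in>M. c (d a) a = a \<and> c a (r a) = a) \<and>
       (\<forall>a\<in>M. \<forall>b\<in>M. \<forall>e\<in>M. r a = d b \<and> r b = d e \<longrightarrow> c (c a b) e = c a (c b e)) \<and>
       (\<forall>a. a \<notin> M \<longrightarrow> d a = undefined \<and> r a = undefined) \<and>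
       (\<forall>a b. \<not> (a \<in> M \<and> b \<in> M \<and> r a = d b) \<longrightarrow> c a b = undefined))"

definition partial_order_on_mor :: "'a set \<Rightarrow> ('a \<Rightarrow> 'a \<Rightarrow> bool) \<Rightarrow> bool" where
  "partial_order_on_mor M le \<longleftrightarrow>
     (\<forall>x y. le x y \<longrightarrow> x \<in> M \<and> y \<in> M) \<and> (\<forall>x\<in>M. le x x) \<and>
     (\<forall>x y. le x y \<and> le y x \<longrightarrow> x = y) \<and> (\<forall>x y z. le x y \<and> le y z \<longrightarrow> le x z)"

definition ordered_category_common :: "'a cpc \<Rightarrow> ('a \<Rightarrow> 'a \<Rightarrow> bool) \<Rightarrow> bool" where
  "ordered_category_common C le \<longleftrightarrow>
     partial_order_on_mor (cpc_mor C) le \<and>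
     (\<forall>a b. le a b \<longrightarrow> le (cpc_dom C a) (cpc_dom C b) \<and> le (cpc_cod C a) (cpc_cod C b)) \<and>
     (\<forall>a b e e'. le a b \<and> le e e' \<and> cpc_cod C a = cpc_dom C e \<and> cpc_cod C b = cpc_dom C e' \<longrightarrow>
        le (cpc_comp C a e) (cpc_comp C b e'))"

definition left_ordered :: "'a cpc \<Rightarrow> bool" where
  "left_ordered C \<longleftrightarrow> ordered_category_common C (cpc_lel C) \<and>
     (\<forall>a\<in>cpc_mor C. \<forall>p\<in>cpc_obj C. cpc_lel C p (cpc_dom C a) \<longrightarrow>
        (\<exists>!u. cpc_lel C u a \<and> cpc_dom C u = p))"

definition right_ordered :: "'a cpc \<Rightarrow> bool" where
  "right_ordered C \<longleftrightarrow> ordered_category_common C (cpc_ler C) \<and>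
     (\<forall>a\<in>cpc_mor C. \<forall>q\<in>cpc_obj C. cpc_ler C q (cpc_cod C a) \<longrightarrow>
        (\<exists>!v. cpc_ler C v a \<and> cpc_cod C v = q))"

definition biordered :: "'a cpc \<Rightarrow> bool" where
  "biordered C \<longleftrightarrow> small_category C \<and> left_ordered C \<and> right_ordered C \<and>
     (\<forall>p\<in>cpc_obj C. \<forall>q\<in>cpc_obj C. cpc_lel C p q \<longleftrightarrow> cpc_ler C p q)"

definition weak_projection_category :: "'a cpc \<Rightarrow> bool" where
  "weak_projection_category C \<longleftrightarrow> biordered C \<and>
     projection_algebra (cpc_obj C) (cpc_theta C) (cpc_delta C) \<and>
     (\<forall>p q. \<not> (p \<in> cpc_obj C \<and> q \<in> cpc_obj C) \<longrightarrow>
        cpc_theta C p q = undefined \<and> cpc_delta C p q = undefined) \<and>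
     (\<forall>p\<in>cpc_obj C. \<forall>q\<in>cpc_obj C.
        (cpc_lel C p q \<longleftrightarrow> proj_le (cpc_theta C) p q) \<and>
        (cpc_ler C p q \<longleftrightarrow> proj_le (cpc_theta C) p q))"

definition lres :: "'a cpc \<Rightarrow> 'a \<Rightarrow> 'a \<Rightarrow> 'a" where
  "lres C p a = (THE u. cpc_lel C u a \<and> cpc_dom C u = p)"

definition rres :: "'a cpc \<Rightarrow> 'a \<Rightarrow> 'a \<Rightarrow> 'a" where
  "rres C a q = (THE v. cpc_ler C v a \<and> cpc_cod C v = q)"

definition Theta :: "'a cpc \<Rightarrow> 'a \<Rightarrow> 'a \<Rightarrow> 'a" where
  "Theta C a x = cpc_cod C (lres C (cpc_theta C (cpc_dom C a) x) a)"

definition Delta :: "'a cpc \<Rightarrow> 'a \<Rightarrow> 'a \<Rightarrow> 'a" where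
  "Delta C a x = cpc_dom C (rres C a (cpc_delta C (cpc_cod C a) x))"

definition condition_C1 :: "'a cpc \<Rightarrow> bool" where
  "condition_C1 C \<longleftrightarrow>
     (\<forall>a\<in>cpc_mor C.
       (\<forall>q\<in>cpc_obj C. proj_le (cpc_theta C) q (cpc_cod C a) \<longrightarrow>
          (\<forall>x\<in>cpc_obj C. Theta C (rres C a q) x = cpc_theta C q (Theta C a x))) \<and>
       (\<forall>p\<in>cpc_obj C. proj_le (cpc_theta C) p (cpc_dom C a) \<longrightarrow>
          (\<forall>x\<in>cpc_obj C. Delta C (lres C p a) x = cpc_delta C p (Delta C a x))))"

definition projection_category :: "'a cpc \<Rightarrow> bool" where
  "projection_category C \<longleftrightarrow> weak_projection_category C \<and> condition_C1 C"

definition is_path :: "'a set \<Rightarrow> ('a \<Rightarrow> 'a \<Rightarrow> 'a) \<Rightarrow> ('a \<Rightarrow> 'a \<Rightarrow> 'a) \<Rightarrow> 'a list \<Rightarrow> bool" where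
  "is_path P th de xs \<longleftrightarrow> xs \<noteq> [] \<and> set xs \<subseteq> P \<and> successively (proj_F th de) xs"

text \<open>Left restriction of a path: q_1 = q, q_i = q_{i-1} theta_{p_i}
  (for q \<le> p_1 one has q theta_{p_1} = q).\<close>

fun lpath :: "('a \<Rightarrow> 'a \<Rightarrow> 'a) \<Rightarrow> 'a \<Rightarrow> 'a list \<Rightarrow> 'a list" where
  "lpath th q [] = []"
| "lpath th q (p # ps) = th p q # lpath th (th p q) ps"

text \<open>Right restriction of a path: r_k = r, r_i = r_{i+1} delta_{p_i}.\<close>

definition rpath :: "('a \<Rightarrow> 'a \<Rightarrow> 'a) \<Rightarrow> 'a \<Rightarrow> 'a list \<Rightarrow> 'a list" where
  "rpath de r xs = rev (lpath de r (rev xs))"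

text \<open>The chain category C(P) is the quotient of the path category by the congruence
  generated by (p,p) ~ (p), i.e. two paths are identified iff they agree after collapsing
  adjacent repetitions. An evaluation map (a biordered functor C(P) -> C fixing objects) is
  represented by a function on paths that is constant on these classes.\<close>

definition evaluation_map :: "'a cpc \<Rightarrow> bool" where
  "evaluation_map C \<longleftrightarrow>
     (let P = cpc_obj C; th = cpc_theta C; de = cpc_delta C; \<epsilon> = cpc_eps C;
          path = is_path P th de in
       (\<forall>xs. path xs \<longrightarrow> \<epsilon> xs \<in> cpc_mor C \<and> cpc_dom C (\<epsilon> xs) = hd xs \<and>
                           cpc_cod C (\<epsilon> xs) = last xs) \<and>
       (\<forall>xs ys. path xs \<and> path ys \<and> remdups_adj xs = remdups_adj ys \<longrightarrow> \<epsilon> xs = \<epsilon> ys) \<and>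
       (\<forall>xs ys. path xs \<and> path ys \<and> last xs = hd ys \<longrightarrow>
           \<epsilon> (xs @ tl ys) = cpc_comp C (\<epsilon> xs) (\<epsilon> ys)) \<and>
       (\<forall>p\<in>P. \<epsilon> [p] = p) \<and>
       (\<forall>xs. path xs \<longrightarrow> (\<forall>q\<in>P. proj_le th q (hd xs) \<longrightarrow>
           cpc_lel C (\<epsilon> (lpath th q xs)) (\<epsilon> xs))) \<and>
       (\<forall>xs. path xs \<longrightarrow> (\<forall>q\<in>P. proj_le th q (last xs) \<longrightarrow>
           cpc_ler C (\<epsilon> (rpath de q xs)) (\<epsilon> xs))) \<and>
       (\<forall>xs. \<not> path xs \<longrightarrow> \<epsilon> xs = undefined))"

definition lambda_map :: "'a cpc \<Rightarrow> 'a \<Rightarrow> 'a \<Rightarrow> 'a \<Rightarrow> 'a" where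
  "lambda_map C p b s =
     (let th = cpc_theta C; de = cpc_delta C; \<epsilon> = cpc_eps C; comp = cpc_comp C;
          q = cpc_dom C b;
          e = de p (Delta C b s); e1 = de (th q p) (Delta C b s);
          f = th s (Theta C b p); f1 = de (Theta C b p) s
      in comp (comp (\<epsilon> [e, e1]) (rres C (lres C (th q p) b) f1)) (\<epsilon> [f1, f]))"

definition rho_map :: "'a cpc \<Rightarrow> 'a \<Rightarrow> 'a \<Rightarrow> 'a \<Rightarrow> 'a" where
  "rho_map C p b s =
     (let th = cpc_theta C; de = cpc_delta C; \<epsilon> = cpc_eps C; comp = cpc_comp C;
          r = cpc_cod C b;
          e = de p (Delta C b s); e2 = th (Delta C b s) p;
          f = th s (Theta C b p); f2 = th (de r s) (Theta C b p)
      in comp (comp (\<epsilon> [e, e2]) (lres C e2 (rres C b (de r s)))) (\<epsilon> [f2, f]))"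

definition is_cpc :: "'a cpc \<Rightarrow> bool" where
  "is_cpc C \<longleftrightarrow> projection_category C \<and> evaluation_map C \<and>
     (\<forall>b\<in>cpc_mor C. \<forall>p\<in>cpc_obj C. \<forall>s\<in>cpc_obj C. lambda_map C p b s = rho_map C p b s)"

definition cpc_hom :: "'a cpc \<Rightarrow> 'a cpc \<Rightarrow> ('a \<Rightarrow> 'a) set" where
  "cpc_hom C C' = {\<phi>. \<phi> \<in> cpc_mor C \<rightarrow>\<^sub>E cpc_mor C' \<and>
      (\<forall>a\<in>cpc_mor C. \<phi> (cpc_dom C a) = cpc_dom C' (\<phi> a) \<and> \<phi> (cpc_cod C a) = cpc_cod C' (\<phi> a)) \<and>
      (\<forall>a\<in>cpc_mor C. \<forall>b\<in>cpc_mor C. cpc_cod C a = cpc_dom C b \<longrightarrow>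
          \<phi> (cpc_comp C a b) = cpc_comp C' (\<phi> a) (\<phi> b)) \<and>
      (\<forall>a b. cpc_lel C a b \<longrightarrow> cpc_lel C' (\<phi> a) (\<phi> b)) \<and>
      (\<forall>a b. cpc_ler C a b \<longrightarrow> cpc_ler C' (\<phi> a) (\<phi> b)) \<and>
      \<phi> ` cpc_obj C \<subseteq> cpc_obj C' \<and>
      (\<forall>p\<in>cpc_obj C. \<forall>q\<in>cpc_obj C.
          \<phi> (cpc_theta C p q) = cpc_theta C' (\<phi> p) (\<phi> q) \<and>
          \<phi> (cpc_delta C p q) = cpc_delta C' (\<phi> p) (\<phi> q)) \<and>
      (\<forall>xs. is_path (cpc_obj C) (cpc_theta C) (cpc_delta C) xs \<longrightarrow>
          cpc_eps C' (map \<phi> xs) = \<phi> (cpc_eps C xs))}"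

definition cpc_id :: "'a cpc \<Rightarrow> 'a \<Rightarrow> 'a" where
  "cpc_id C = (\<lambda>x\<in>cpc_mor C. x)"

definition cpc_fcomp :: "'a cpc \<Rightarrow> 'a cpc \<Rightarrow> 'a cpc \<Rightarrow> ('a \<Rightarrow> 'a) \<Rightarrow> ('a \<Rightarrow> 'a) \<Rightarrow> 'a \<Rightarrow> 'a" where
  "cpc_fcomp C D E g f = compose (cpc_mor C) g f"

end

theory Submission
  imports Defs
begin

locale pa =
  fixes P :: "'a set" and th de :: "'a \<Rightarrow> 'a \<Rightarrow> 'a"
  assumes PA: "projection_algebra P th de"
begin
lemma cl: "p\<in>P \<Longrightarrow> q\<in>P \<Longrightarrow> th p q \<in> P" "p\<in>P \<Longrightarrow> q\<in>P \<Longrightarrow> de p q \<in> P"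
  using PA unfolding projection_algebra_def by auto
lemma a1: "p\<in>P \<Longrightarrow> th p p = p" "p\<in>P \<Longrightarrow> de p p = p"
  using PA unfolding projection_algebra_def by auto
lemma a2: "p\<in>P \<Longrightarrow> q\<in>P \<Longrightarrow> th (th p q) p = th p q" "p\<in>P \<Longrightarrow> q\<in>P \<Longrightarrow> de (de p q) p = de p q"
  using PA unfolding projection_algebra_def by auto
lemma a3: "p\<in>P \<Longrightarrow> q\<in>P \<Longrightarrow> x\<in>P \<Longrightarrow> th (th p q) (th q x) = th p (th q x)"
   "p\<in>P \<Longrightarrow> q\<in>P \<Longrightarrow> x\<in>P \<Longrightarrow> de (de p q) (de q x) = de p (de q x)"
  using PA unfolding projection_algebra_def by auto
lemma a4: "p\<in>P \<Longrightarrow> x\<in>P \<Longrightarrow> de p (th p x) = th p x" "p\<in>P \<Longrightarrow> x\<in>P \<Longrightarrow> th p (de p x) = de p x"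
  using PA unfolding projection_algebra_def by auto
lemma a5: "p\<in>P \<Longrightarrow> q\<in>P \<Longrightarrow> x\<in>P \<Longrightarrow> th p (th (de q p) x) = th p (th q x)"
   "p\<in>P \<Longrightarrow> q\<in>P \<Longrightarrow> x\<in>P \<Longrightarrow> de p (de (th q p) x) = de p (de q x)"
  using PA unfolding projection_algebra_def by auto

lemma thth: "p\<in>P \<Longrightarrow> x\<in>P \<Longrightarrow> th p (th p x) = th p x"
  by (metis a4(1,2) cl(1))
lemma dede: "p\<in>P \<Longrightarrow> x\<in>P \<Longrightarrow> de p (de p x) = de p x"
  by (metis a4(1,2) cl(2))
lemma le_de: "p\<in>P \<Longrightarrow> q\<in>P \<Longrightarrow> th q p = p \<Longrightarrow> de q p = p"
  by (metis a4(1))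
lemma de_le: "p\<in>P \<Longrightarrow> q\<in>P \<Longrightarrow> de q p = p \<Longrightarrow> th q p = p"
  by (metis a4(2))
lemma le_trans: "p\<in>P \<Longrightarrow> q\<in>P \<Longrightarrow> r\<in>P \<Longrightarrow> th q p = p \<Longrightarrow> th r q = q \<Longrightarrow> th r p = p"
  by (metis a3(1))
lemma le_down: "p\<in>P \<Longrightarrow> q\<in>P \<Longrightarrow> th q p = p \<Longrightarrow> th p q = p"
  by (metis a2(1))
lemma le_down2: "p\<in>P \<Longrightarrow> q\<in>P \<Longrightarrow> th q p = p \<Longrightarrow> de p q = p"
  by (metis a2(2) a4(1))
lemma le_antisym: "p\<in>P \<Longrightarrow> q\<in>P \<Longrightarrow> th q p = p \<Longrightarrow> th p q = q \<Longrightarrow> p = q"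
  by (metis le_down)
lemma F_ef: "r\<in>P \<Longrightarrow> q\<in>P \<Longrightarrow> de (de r q) (th q r) = de r q"
  by (smt (verit, del_insts) PA projection_algebra_def)
lemma F_ef2: "r\<in>P \<Longrightarrow> q\<in>P \<Longrightarrow> th (th q r) (de r q) = th q r"
  by (metis a1(1) a2(1) a3(1) a4(2) a5(1) cl(2))
lemma lstep1: "x\<in>P \<Longrightarrow> y\<in>P \<Longrightarrow> q\<in>P \<Longrightarrow> x = de x y \<Longrightarrow> y = th y x \<Longrightarrow> th x q = q \<Longrightarrow> de q (th y q) = q"
  by (metis a2(2) a4(1) a5(2) cl(1) dede)
lemma lstep2: "x\<in>P \<Longrightarrow> y\<in>P \<Longrightarrow> q\<in>P \<Longrightarrow> x = de x y \<Longrightarrow> y = th y x \<Longrightarrow> th x q = q \<Longrightarrow> th (th y q) q = th y q"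
  by (metis a2(1) a3(1))
lemma rstep1: "x\<in>P \<Longrightarrow> y\<in>P \<Longrightarrow> q\<in>P \<Longrightarrow> x = de x y \<Longrightarrow> y = th y x \<Longrightarrow> th y q = q \<Longrightarrow> th q (de x q) = q"
  by (metis a2(1) a4(1,2) a5(1) cl(1,2))
lemma rstep2: "x\<in>P \<Longrightarrow> y\<in>P \<Longrightarrow> q\<in>P \<Longrightarrow> x = de x y \<Longrightarrow> y = th y x \<Longrightarrow> th y q = q \<Longrightarrow> de (de x q) q = de x q"
  by (metis a1(2) a3(2))
lemma lam_id: "p\<in>P \<Longrightarrow> q\<in>P \<Longrightarrow> z\<in>P \<Longrightarrow> th q z = z \<Longrightarrow> de (de p q) (de (th q p) z) = de p z"
  by (smt (verit) a1(2) a2(2) a4(1) a5(2) cl(1) pa.a3(2) pa_axioms)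
lemma rho_id: "s\<in>P \<Longrightarrow> r\<in>P \<Longrightarrow> w\<in>P \<Longrightarrow> th r w = w \<Longrightarrow> th (th s r) (th (de r s) w) = th s w"
proof -
  assume s: "s\<in>P" and r: "r\<in>P" and w: "w\<in>P" and wr: "th r w = w"
  have A: "th s (th (de r s) w) = th s w" using a5(1)[OF s r w] wr by simp
  have y: "th (de r s) w \<in> P" using cl r s w by blast
  have yr: "th r (th (de r s) w) = th (de r s) w"
    by (meson cl(2) le_trans r s thth w y a4(2))
  have "th (th s r) (th (de r s) w) = th (th s r) (th r (th (de r s) w))" using yr by simp
  also have "\<dots> = th s (th r (th (de r s) w))" using a3(1)[OF s r y] .
  also have "\<dots> = th s w" using yr A by simp
  finally show ?thesis .
qed
end

locale drcl =
  fixes A :: "'a set" and m :: "'a \<Rightarrow> 'a \<Rightarrow> 'a" and D R :: "'a \<Rightarrow> 'a"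
  assumes mcl: "a\<in>A \<Longrightarrow> b\<in>A \<Longrightarrow> m a b \<in> A"
  and Dcl: "a\<in>A \<Longrightarrow> D a \<in> A" and Rcl: "a\<in>A \<Longrightarrow> R a \<in> A"
  and assoc: "a\<in>A \<Longrightarrow> b\<in>A \<Longrightarrow> c\<in>A \<Longrightarrow> m (m a b) c = m a (m b c)"
  and Dl: "a\<in>A \<Longrightarrow> m (D a) a = a" and Rr: "a\<in>A \<Longrightarrow> m a (R a) = a"
  and DD: "a\<in>A \<Longrightarrow> b\<in>A \<Longrightarrow> D (m a b) = D (m a (D b))"
  and RR: "a\<in>A \<Longrightarrow> b\<in>A \<Longrightarrow> R (m a b) = R (m (R a) b)"
  and D3: "a\<in>A \<Longrightarrow> b\<in>A \<Longrightarrow> D (m a b) = m (m (D a) (D (m a b))) (D a)"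
  and R3: "a\<in>A \<Longrightarrow> b\<in>A \<Longrightarrow> R (m a b) = m (m (R b) (R (m a b))) (R b)"
  and RD: "a\<in>A \<Longrightarrow> R (D a) = D a" and DR: "a\<in>A \<Longrightarrow> D (R a) = R a"
begin
lemma dual: "drcl A (\<lambda>a b. m b a) R D"
  apply unfold_locales
  apply (simp_all add: mcl Rcl Dcl Rr Dl)
  apply (simp add: assoc)
  apply (simp add: RR)
  apply (simp add: DD)
  subgoal for a b
    apply (subst R3[of b a], assumption+)
    by (rule assoc) (auto intro: Rcl mcl)
  subgoal for a b
    apply (subst D3[of b a], assumption+)
    by (rule assoc) (auto intro: Dcl mcl)
  apply (simp add: DR)
  apply (simp add: RD)
  done

definition "PP = {p\<in>A. D p = p}"

lemma DDa: "a\<in>A \<Longrightarrow> D (D a) = D a" using DR[OF Dcl, of a] RD[of a] by simp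
lemma RRa: "a\<in>A \<Longrightarrow> R (R a) = R a" using RD[OF Rcl, of a] DR[of a] by simp
lemma PP_R: "p\<in>PP \<Longrightarrow> R p = p" unfolding PP_def using RD by force
lemma D_PP: "a\<in>A \<Longrightarrow> D a \<in> PP" unfolding PP_def by (simp add: DDa Dcl)
lemma R_PP: "a\<in>A \<Longrightarrow> R a \<in> PP" unfolding PP_def by (simp add: DR Rcl)
lemma PP_A: "p\<in>PP \<Longrightarrow> p\<in>A" unfolding PP_def by simp
lemma PP_D: "p\<in>PP \<Longrightarrow> D p = p" unfolding PP_def by simp
lemma idem: "p\<in>PP \<Longrightarrow> m p p = p" using Dl[OF PP_A] PP_D by force

lemma Dle1: "a\<in>A \<Longrightarrow> b\<in>A \<Longrightarrow> m (D a) (D (m a b)) = D (m a b)"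
  by (smt (verit) D3 Dcl RD Rr assoc mcl)
lemma Dle2: "a\<in>A \<Longrightarrow> b\<in>A \<Longrightarrow> m (D (m a b)) (D a) = D (m a b)"
  by (smt (verit) D3 DDa Dcl Dl assoc mcl)
lemma h1: "p\<in>PP \<Longrightarrow> q\<in>PP \<Longrightarrow> m p q = m (D (m p q)) (R (m p q))"
  by (smt (verit) D3 Dcl Dl PP_A PP_D PP_R R3 Rcl Rr assoc mcl)
lemma leP: "p\<in>PP \<Longrightarrow> q\<in>PP \<Longrightarrow> p = R (m p q) \<Longrightarrow> m p q = p"
  by (metis PP_A PP_R R3 Rr assoc mcl)
lemma leP2: "p\<in>PP \<Longrightarrow> q\<in>PP \<Longrightarrow> p = R (m p q) \<Longrightarrow> m q p = p"
  by (metis PP_A PP_R R3 assoc idem mcl)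

lemma pa3: "p\<in>PP \<Longrightarrow> q\<in>PP \<Longrightarrow> R (m p (R (m q p))) = R (m q p)"
  by (metis (full_types) PP_A PP_R R3 R_PP assoc idem mcl)
lemma pa3': "p\<in>PP \<Longrightarrow> q\<in>PP \<Longrightarrow> D (m (D (m p q)) p) = D (m p q)"
  by (metis D3 DDa Dle1 PP_A PP_D mcl)
lemma pa4: "p\<in>PP \<Longrightarrow> q\<in>PP \<Longrightarrow> x\<in>PP \<Longrightarrow> R (m (R (m x q)) (R (m q p))) = R (m (R (m x q)) p)"
  by (smt (verit) PP_A PP_R R3 Rcl Rr assoc mcl)
lemma pa4': "p\<in>PP \<Longrightarrow> q\<in>PP \<Longrightarrow> x\<in>PP \<Longrightarrow> D (m (D (m p q)) (D (m q x))) = D (m p (D (m q x)))"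
  by (smt (verit) D3 Dcl Dl PP_A PP_D assoc mcl)
lemma pa5: "p\<in>PP \<Longrightarrow> x\<in>PP \<Longrightarrow> D (m p (R (m x p))) = R (m x p)"
  by (smt (verit, del_insts) DR Dl PP_A PP_R R3 R_PP assoc mcl)
lemma pa5': "p\<in>PP \<Longrightarrow> x\<in>PP \<Longrightarrow> R (m (D (m p x)) p) = D (m p x)"
  by (metis Dle2 PP_A PP_D RD mcl)
lemma pa6: "p\<in>PP \<Longrightarrow> q\<in>PP \<Longrightarrow> x\<in>PP \<Longrightarrow> R (m (R (m x (D (m q p)))) p) = R (m (R (m x q)) p)"
  by (smt (verit, best) D3 Dcl Dl PP_A PP_D RR assoc mcl)
lemma pa6': "p\<in>PP \<Longrightarrow> q\<in>PP \<Longrightarrow> x\<in>PP \<Longrightarrow> D (m p (D (m (R (m p q)) x))) = D (m p (D (m q x)))"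
  by (smt (verit) DD Dle1 PP_A PP_D Rcl Rr assoc mcl pa5)
end


locale pcpc =
  fixes C :: "'a cpc"
  assumes pc: "projection_category C" and ev: "evaluation_map C"
begin
abbreviation "M \<equiv> cpc_mor C"
abbreviation "dm \<equiv> cpc_dom C"
abbreviation "cd \<equiv> cpc_cod C"
abbreviation "cp \<equiv> cpc_comp C"
abbreviation "Ob \<equiv> cpc_obj C"
abbreviation "TH \<equiv> cpc_theta C"
abbreviation "DE \<equiv> cpc_delta C"
abbreviation "EP \<equiv> cpc_eps C"
abbreviation "LL \<equiv> cpc_lel C"
abbreviation "LR \<equiv> cpc_ler C"
abbreviation "isp \<equiv> is_path Ob TH DE"

lemma wpc: "weak_projection_category C" using pc projection_category_def by blast
lemma C1: "condition_C1 C" using pc projection_category_def by blast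
lemma bio: "biordered C" using wpc weak_projection_category_def by blast
lemma sc: "small_category C" using bio biordered_def by blast
lemma lo: "left_ordered C" using bio biordered_def by blast
lemma ro: "right_ordered C" using bio biordered_def by blast

lemma dmM: "a\<in>M \<Longrightarrow> dm a \<in> M" using sc unfolding small_category_def Let_def by blast
lemma cdM: "a\<in>M \<Longrightarrow> cd a \<in> M" using sc unfolding small_category_def Let_def by blast
lemma dmdm: "a\<in>M \<Longrightarrow> dm (dm a) = dm a" using sc unfolding small_category_def Let_def by blast
lemma cddm: "a\<in>M \<Longrightarrow> cd (dm a) = dm a" using sc unfolding small_category_def Let_def by blast
lemma dmcd: "a\<in>M \<Longrightarrow> dm (cd a) = cd a" using sc unfolding small_category_def Let_def by blast
lemma cdcd: "a\<in>M \<Longrightarrow> cd (cd a) = cd a" using sc unfolding small_category_def Let_def by blast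
lemma cpM: "a\<in>M \<Longrightarrow> b\<in>M \<Longrightarrow> cd a = dm b \<Longrightarrow> cp a b \<in> M"
  using sc unfolding small_category_def Let_def by blast
lemma dm_cp: "a\<in>M \<Longrightarrow> b\<in>M \<Longrightarrow> cd a = dm b \<Longrightarrow> dm (cp a b) = dm a"
  using sc unfolding small_category_def Let_def by blast
lemma cd_cp: "a\<in>M \<Longrightarrow> b\<in>M \<Longrightarrow> cd a = dm b \<Longrightarrow> cd (cp a b) = cd b"
  using sc unfolding small_category_def Let_def by blast
lemma cp_idl: "a\<in>M \<Longrightarrow> cp (dm a) a = a" using sc unfolding small_category_def Let_def by blast
lemma cp_idr: "a\<in>M \<Longrightarrow> cp a (cd a) = a" using sc unfolding small_category_def Let_def by blast
lemma cp_assoc: "a\<in>M \<Longrightarrow> b\<in>M \<Longrightarrow> e\<in>M \<Longrightarrow> cd a = dm b \<Longrightarrow> cd b = dm e \<Longrightarrow>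
   cp (cp a b) e = cp a (cp b e)" using sc unfolding small_category_def Let_def by blast
lemma dm_out: "a\<notin>M \<Longrightarrow> dm a = undefined" using sc unfolding small_category_def Let_def by blast
lemma cd_out: "a\<notin>M \<Longrightarrow> cd a = undefined" using sc unfolding small_category_def Let_def by blast
lemma cp_out: "\<not> (a\<in>M \<and> b\<in>M \<and> cd a = dm b) \<Longrightarrow> cp a b = undefined"
  using sc unfolding small_category_def Let_def by blast

lemma Ob_def': "Ob = dm ` M" by (simp add: cpc_obj_def)
lemma dm_Ob: "a\<in>M \<Longrightarrow> dm a \<in> Ob" by (simp add: cpc_obj_def)
lemma cd_Ob: "a\<in>M \<Longrightarrow> cd a \<in> Ob" by (metis cdM dm_Ob dmcd)
lemma Ob_M: "p\<in>Ob \<Longrightarrow> p\<in>M" using dmM by (auto simp: cpc_obj_def)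
lemma Ob_dm: "p\<in>Ob \<Longrightarrow> dm p = p" using dmdm by (auto simp: cpc_obj_def)
lemma Ob_cd: "p\<in>Ob \<Longrightarrow> cd p = p" using cddm by (auto simp: cpc_obj_def)

lemma PA: "projection_algebra Ob TH DE" using wpc weak_projection_category_def by blast
sublocale pa Ob TH DE by (unfold_locales) (rule PA)

lemma TH_out: "\<not> (p\<in>Ob \<and> q\<in>Ob) \<Longrightarrow> TH p q = undefined"
  using wpc unfolding weak_projection_category_def by simp
lemma DE_out: "\<not> (p\<in>Ob \<and> q\<in>Ob) \<Longrightarrow> DE p q = undefined"
  using wpc unfolding weak_projection_category_def by simp
lemma LL_Ob: "p\<in>Ob \<Longrightarrow> q\<in>Ob \<Longrightarrow> LL p q \<longleftrightarrow> TH q p = p"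
  using wpc unfolding weak_projection_category_def proj_le_def by auto
lemma LR_Ob: "p\<in>Ob \<Longrightarrow> q\<in>Ob \<Longrightarrow> LR p q \<longleftrightarrow> TH q p = p"
  using wpc unfolding weak_projection_category_def proj_le_def by auto

lemma occL: "ordered_category_common C LL" using lo left_ordered_def by blast
lemma occR: "ordered_category_common C LR" using ro right_ordered_def by blast

lemma LL_M: "LL a b \<Longrightarrow> a\<in>M \<and> b\<in>M" using occL
  unfolding ordered_category_common_def partial_order_on_mor_def by blast
lemma LL_refl: "a\<in>M \<Longrightarrow> LL a a" using occL
  unfolding ordered_category_common_def partial_order_on_mor_def by blast
lemma LL_antisym: "LL a b \<Longrightarrow> LL b a \<Longrightarrow> a = b" using occL
  unfolding ordered_category_common_def partial_order_on_mor_def by blast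
lemma LL_trans: "LL a b \<Longrightarrow> LL b e \<Longrightarrow> LL a e" using occL
  unfolding ordered_category_common_def partial_order_on_mor_def by blast
lemma LL_dm: "LL a b \<Longrightarrow> LL (dm a) (dm b)" using occL
  unfolding ordered_category_common_def by blast
lemma LL_cd: "LL a b \<Longrightarrow> LL (cd a) (cd b)" using occL
  unfolding ordered_category_common_def by blast
lemma LL_cp: "LL a b \<Longrightarrow> LL e e' \<Longrightarrow> cd a = dm e \<Longrightarrow> cd b = dm e' \<Longrightarrow> LL (cp a e) (cp b e')"
  using occL unfolding ordered_category_common_def by blast
lemma LR_M: "LR a b \<Longrightarrow> a\<in>M \<and> b\<in>M" using occR
  unfolding ordered_category_common_def partial_order_on_mor_def by blast
lemma LR_refl: "a\<in>M \<Longrightarrow> LR a a" using occR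
  unfolding ordered_category_common_def partial_order_on_mor_def by blast
lemma LR_antisym: "LR a b \<Longrightarrow> LR b a \<Longrightarrow> a = b" using occR
  unfolding ordered_category_common_def partial_order_on_mor_def by blast
lemma LR_trans: "LR a b \<Longrightarrow> LR b e \<Longrightarrow> LR a e" using occR
  unfolding ordered_category_common_def partial_order_on_mor_def by blast
lemma LR_dm: "LR a b \<Longrightarrow> LR (dm a) (dm b)" using occR
  unfolding ordered_category_common_def by blast
lemma LR_cd: "LR a b \<Longrightarrow> LR (cd a) (cd b)" using occR
  unfolding ordered_category_common_def by blast
lemma LR_cp: "LR a b \<Longrightarrow> LR e e' \<Longrightarrow> cd a = dm e \<Longrightarrow> cd b = dm e' \<Longrightarrow> LR (cp a e) (cp b e')"
  using occR unfolding ordered_category_common_def by blast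

lemma LL_le_dm: "LL a b \<Longrightarrow> TH (dm b) (dm a) = dm a"
  by (meson LL_M LL_Ob LL_dm dm_Ob)
lemma LL_le_cd: "LL a b \<Longrightarrow> TH (cd b) (cd a) = cd a"
  by (meson LL_M LL_Ob LL_cd cd_Ob)
lemma LR_le_dm: "LR a b \<Longrightarrow> TH (dm b) (dm a) = dm a"
  by (meson LR_M LR_Ob LR_dm dm_Ob)
lemma LR_le_cd: "LR a b \<Longrightarrow> TH (cd b) (cd a) = cd a"
  by (meson LR_M LR_Ob LR_cd cd_Ob)

lemma lres_ex: assumes "a\<in>M" "p\<in>Ob" "TH (dm a) p = p" shows "\<exists>!u. LL u a \<and> dm u = p"
proof -
  have "LL p (dm a)" using LL_Ob assms dm_Ob by auto
  then show ?thesis using lo assms unfolding left_ordered_def by blast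
qed
lemma rres_ex: assumes "a\<in>M" "q\<in>Ob" "TH (cd a) q = q" shows "\<exists>!v. LR v a \<and> cd v = q"
proof -
  have "LR q (cd a)" using LR_Ob assms cd_Ob by auto
  then show ?thesis using ro assms unfolding right_ordered_def by blast
qed

lemma lres: assumes "a\<in>M" "p\<in>Ob" "TH (dm a) p = p"
  shows "LL (lres C p a) a" "dm (lres C p a) = p" "lres C p a \<in> M"
proof -
  have "LL (lres C p a) a \<and> dm (lres C p a) = p"
    unfolding lres_def by (rule theI'[OF lres_ex[OF assms]])
  then show "LL (lres C p a) a" "dm (lres C p a) = p" "lres C p a \<in> M" using LL_M by auto
qed
lemma lres_uniq: assumes "LL u a" shows "lres C (dm u) a = u"
proof -
  have a: "a\<in>M" "dm u \<in> Ob" "TH (dm a) (dm u) = dm u" using assms LL_M LL_le_dm dm_Ob by auto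
  show ?thesis using lres[OF a] lres_ex[OF a] assms by blast
qed
lemma rres: assumes "a\<in>M" "q\<in>Ob" "TH (cd a) q = q"
  shows "LR (rres C a q) a" "cd (rres C a q) = q" "rres C a q \<in> M"
proof -
  have "LR (rres C a q) a \<and> cd (rres C a q) = q"
    unfolding rres_def by (rule theI'[OF rres_ex[OF assms]])
  then show "LR (rres C a q) a" "cd (rres C a q) = q" "rres C a q \<in> M" using LR_M by auto
qed
lemma rres_uniq: assumes "LR u a" shows "rres C a (cd u) = u"
proof -
  have a: "a\<in>M" "cd u \<in> Ob" "TH (cd a) (cd u) = cd u" using assms LR_M LR_le_cd cd_Ob by auto
  show ?thesis using rres[OF a] rres_ex[OF a] assms by blast
qed

end

definition cprod :: "'a cpc \<Rightarrow> 'a \<Rightarrow> 'a \<Rightarrow> 'a" where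
  "cprod C a b = (let e = cpc_delta C (cpc_cod C a) (cpc_dom C b);
                      f = cpc_theta C (cpc_dom C b) (cpc_cod C a)
                  in cpc_comp C (cpc_comp C (rres C a e) (cpc_eps C [e, f])) (lres C f b))"

context pcpc begin

lemma ThLe: "p\<in>Ob \<Longrightarrow> x\<in>Ob \<Longrightarrow> TH p (TH p x) = TH p x" by (rule thth)
lemma DeLe: "p\<in>Ob \<Longrightarrow> x\<in>Ob \<Longrightarrow> TH p (DE p x) = DE p x" by (rule a4(2))

lemma lres_obj: "p\<in>Ob \<Longrightarrow> x\<in>Ob \<Longrightarrow> TH p x = x \<Longrightarrow> lres C x p = x"
  using lres_uniq[of x p] LL_Ob Ob_dm by auto
lemma rres_obj: "p\<in>Ob \<Longrightarrow> x\<in>Ob \<Longrightarrow> TH p x = x \<Longrightarrow> rres C p x = x"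
  using rres_uniq[of x p] LR_Ob Ob_cd by auto
lemma lres_dm: "a\<in>M \<Longrightarrow> lres C (dm a) a = a" using lres_uniq LL_refl by blast
lemma rres_cd: "a\<in>M \<Longrightarrow> rres C a (cd a) = a" using rres_uniq LR_refl by blast

lemma lres_cd_le: "a\<in>M \<Longrightarrow> p\<in>Ob \<Longrightarrow> TH (dm a) p = p \<Longrightarrow> TH (cd a) (cd (lres C p a)) = cd (lres C p a)"
  using lres(1) LL_le_cd by blast
lemma rres_dm_le: "a\<in>M \<Longrightarrow> q\<in>Ob \<Longrightarrow> TH (cd a) q = q \<Longrightarrow> TH (dm a) (dm (rres C a q)) = dm (rres C a q)"
  using rres(1) LR_le_dm by blast

lemma lres_lres: assumes "a\<in>M" "p\<in>Ob" "p'\<in>Ob" "TH p' p = p" "TH (dm a) p' = p'"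
  shows "lres C p (lres C p' a) = lres C p a"
proof -
  have 1: "lres C p' a \<in> M" "dm (lres C p' a) = p'" "LL (lres C p' a) a" using lres assms by auto
  have 2: "LL (lres C p (lres C p' a)) (lres C p' a)" "dm (lres C p (lres C p' a)) = p"
    using lres[of "lres C p' a" p] 1 assms by auto
  have "LL (lres C p (lres C p' a)) a" using 1 2 LL_trans by blast
  then show ?thesis using lres_uniq 2 by metis
qed
lemma rres_rres: assumes "a\<in>M" "q\<in>Ob" "q'\<in>Ob" "TH q' q = q" "TH (cd a) q' = q'"
  shows "rres C (rres C a q') q = rres C a q"
proof -
  have 1: "rres C a q' \<in> M" "cd (rres C a q') = q'" "LR (rres C a q') a" using rres assms by auto
  have 2: "LR (rres C (rres C a q') q) (rres C a q')" "cd (rres C (rres C a q') q) = q"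
    using rres[of "rres C a q'" q] 1 assms by auto
  have "LR (rres C (rres C a q') q) a" using 1 2 LR_trans by blast
  then show ?thesis using rres_uniq 2 by metis
qed

lemma lres_cp: assumes "x\<in>M" "y\<in>M" "cd x = dm y" "p\<in>Ob" "TH (dm x) p = p"
  shows "lres C p (cp x y) = cp (lres C p x) (lres C (cd (lres C p x)) y)"
proof -
  let ?u = "lres C p x"
  have u: "?u \<in> M" "LL ?u x" "dm ?u = p" using lres assms by auto
  have "TH (cd x) (cd ?u) = cd ?u" using LL_le_cd u(2) by blast
  then have cu: "cd ?u \<in> Ob" "TH (dm y) (cd ?u) = cd ?u" using u cd_Ob assms(3) by auto
  let ?v = "lres C (cd ?u) y"
  have v: "?v \<in> M" "LL ?v y" "dm ?v = cd ?u" using lres[OF assms(2) cu] by auto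
  have "LL (cp ?u ?v) (cp x y)" using LL_cp u v assms by auto
  moreover have "dm (cp ?u ?v) = p" using dm_cp u v by auto
  ultimately show ?thesis using lres_uniq by metis
qed
lemma rres_cp: assumes "x\<in>M" "y\<in>M" "cd x = dm y" "q\<in>Ob" "TH (cd y) q = q"
  shows "rres C (cp x y) q = cp (rres C x (dm (rres C y q))) (rres C y q)"
proof -
  let ?v = "rres C y q"
  have v: "?v \<in> M" "LR ?v y" "cd ?v = q" using rres assms by auto
  have "TH (dm y) (dm ?v) = dm ?v" using LR_le_dm v(2) by blast
  then have dv: "dm ?v \<in> Ob" "TH (cd x) (dm ?v) = dm ?v" using v dm_Ob assms(3) by auto
  let ?u = "rres C x (dm ?v)"
  have u: "?u \<in> M" "LR ?u x" "cd ?u = dm ?v" using rres[OF assms(1) dv] by auto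
  have "LR (cp ?u ?v) (cp x y)" using LR_cp u v assms by auto
  moreover have "cd (cp ?u ?v) = q" using cd_cp u v by auto
  ultimately show ?thesis using rres_uniq by metis
qed

lemma isp_def': "isp xs \<longleftrightarrow> xs \<noteq> [] \<and> set xs \<subseteq> Ob \<and> successively (proj_F TH DE) xs"
  by (simp add: is_path_def)
lemma ev_unf: "(\<forall>xs. isp xs \<longrightarrow> EP xs \<in> M \<and> dm (EP xs) = hd xs \<and> cd (EP xs) = last xs) \<and>
       (\<forall>xs ys. isp xs \<and> isp ys \<and> remdups_adj xs = remdups_adj ys \<longrightarrow> EP xs = EP ys) \<and>
       (\<forall>xs ys. isp xs \<and> isp ys \<and> last xs = hd ys \<longrightarrow> EP (xs @ tl ys) = cp (EP xs) (EP ys)) \<and>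
       (\<forall>p\<in>Ob. EP [p] = p) \<and>
       (\<forall>xs. isp xs \<longrightarrow> (\<forall>q\<in>Ob. proj_le TH q (hd xs) \<longrightarrow> LL (EP (lpath TH q xs)) (EP xs))) \<and>
       (\<forall>xs. isp xs \<longrightarrow> (\<forall>q\<in>Ob. proj_le TH q (last xs) \<longrightarrow> LR (EP (rpath DE q xs)) (EP xs))) \<and>
       (\<forall>xs. \<not> isp xs \<longrightarrow> EP xs = undefined)"
  by (rule ev[unfolded evaluation_map_def Let_def])

lemmas ev1 = ev_unf[THEN conjunct1]
lemmas ev2 = ev_unf[THEN conjunct2, THEN conjunct1]
lemmas ev3 = ev_unf[THEN conjunct2, THEN conjunct2, THEN conjunct1]
lemmas ev4 = ev_unf[THEN conjunct2, THEN conjunct2, THEN conjunct2, THEN conjunct1]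
lemmas ev5 = ev_unf[THEN conjunct2, THEN conjunct2, THEN conjunct2, THEN conjunct2, THEN conjunct1]
lemmas ev6 = ev_unf[THEN conjunct2, THEN conjunct2, THEN conjunct2, THEN conjunct2, THEN conjunct2, THEN conjunct1]
lemmas ev7 = ev_unf[THEN conjunct2, THEN conjunct2, THEN conjunct2, THEN conjunct2, THEN conjunct2, THEN conjunct2]

lemma ep: assumes "isp xs" shows "EP xs \<in> M" "dm (EP xs) = hd xs" "cd (EP xs) = last xs"
  using mp[OF spec[OF ev1, of xs] assms] by auto
lemma ep_rd: "isp xs \<Longrightarrow> isp ys \<Longrightarrow> remdups_adj xs = remdups_adj ys \<Longrightarrow> EP xs = EP ys"
  using spec[OF spec[OF ev2, of xs], of ys] by blast
lemma ep_app: "isp xs \<Longrightarrow> isp ys \<Longrightarrow> last xs = hd ys \<Longrightarrow> EP (xs @ tl ys) = cp (EP xs) (EP ys)"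
  using spec[OF spec[OF ev3, of xs], of ys] by blast
lemma ep1: "p\<in>Ob \<Longrightarrow> EP [p] = p" using bspec[OF ev4, of p] by blast
lemma ep_l: "isp xs \<Longrightarrow> q\<in>Ob \<Longrightarrow> TH (hd xs) q = q \<Longrightarrow> LL (EP (lpath TH q xs)) (EP xs)"
  using spec[OF ev5, of xs] unfolding proj_le_def by (metis (no_types))
lemma ep_r: "isp xs \<Longrightarrow> q\<in>Ob \<Longrightarrow> TH (last xs) q = q \<Longrightarrow> LR (EP (rpath DE q xs)) (EP xs)"
  using spec[OF ev6, of xs] unfolding proj_le_def by (metis (no_types))
lemma ep_out: "\<not> isp xs \<Longrightarrow> EP xs = undefined" using spec[OF ev7, of xs] by blast

lemma isp2: "x\<in>Ob \<Longrightarrow> y\<in>Ob \<Longrightarrow> isp [x,y] \<longleftrightarrow> x = DE x y \<and> y = TH y x"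
  unfolding is_path_def proj_F_def by auto
lemma isp1: "x\<in>Ob \<Longrightarrow> isp [x]" by (simp add: is_path_def)
lemma ep_pp: "p\<in>Ob \<Longrightarrow> EP [p,p] = p"
proof -
  assume p: "p\<in>Ob"
  have "isp [p,p]" using isp2 p a1 by simp
  moreover have "remdups_adj [p,p] = remdups_adj [p]" by simp
  ultimately have "EP [p,p] = EP [p]" using ep_rd[OF _ isp1[OF p]] by blast
  then show ?thesis using ep1 p by simp
qed

lemma ep2_lres: assumes "x\<in>Ob" "y\<in>Ob" "isp [x,y]" "q\<in>Ob" "TH x q = q"
  shows "lres C q (EP [x,y]) = EP [q, TH y q]" "isp [q, TH y q]"
proof -
  have F: "x = DE x y" "y = TH y x" using isp2[OF assms(1,2)] assms(3) by auto
  have lp: "lpath TH q [x,y] = [q, TH y q]" using assms(5) by simp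
  have yq: "TH y q \<in> Ob" using cl(1) assms by blast
  have 1: "DE q (TH y q) = q" by (rule lstep1[OF assms(1,2,4) F assms(5)])
  have 2: "TH (TH y q) q = TH y q" by (rule lstep2[OF assms(1,2,4) F assms(5)])
  show ip: "isp [q, TH y q]" using isp2[OF assms(4) yq] 1 2 by simp
  have "LL (EP [q, TH y q]) (EP [x,y])" using ep_l[OF assms(3) assms(4)] assms(5) lp by simp
  moreover have "dm (EP [q, TH y q]) = q" using ep(2)[OF ip] by simp
  ultimately show "lres C q (EP [x,y]) = EP [q, TH y q]" using lres_uniq by metis
qed
lemma ep2_rres: assumes "x\<in>Ob" "y\<in>Ob" "isp [x,y]" "q\<in>Ob" "TH y q = q"
  shows "rres C (EP [x,y]) q = EP [DE x q, q]" "isp [DE x q, q]"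
proof -
  have F: "x = DE x y" "y = TH y x" using isp2[OF assms(1,2)] assms(3) by auto
  have dq: "DE y q = q" using le_de assms(2,4,5) by blast
  have lp: "rpath DE q [x,y] = [DE x q, q]" using dq by (simp add: rpath_def)
  have xq: "DE x q \<in> Ob" using cl(2) assms by blast
  have 1: "TH q (DE x q) = q" by (rule rstep1[OF assms(1,2,4) F assms(5)])
  have 2: "DE (DE x q) q = DE x q" by (rule rstep2[OF assms(1,2,4) F assms(5)])
  show ip: "isp [DE x q, q]" using isp2[OF xq assms(4)] 1 2 by simp
  have "LR (EP [DE x q, q]) (EP [x,y])" using ep_r[OF assms(3) assms(4)] assms(5) lp by simp
  moreover have "cd (EP [DE x q, q]) = q" using ep(3)[OF ip] by simp
  ultimately show "rres C (EP [x,y]) q = EP [DE x q, q]" using rres_uniq by metis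
qed

end

context pcpc begin

lemma pr_basic: assumes a: "a\<in>M" and b: "b\<in>M"
  defines "e \<equiv> DE (cd a) (dm b)" and "f \<equiv> TH (dm b) (cd a)"
  shows "e\<in>Ob" "f\<in>Ob" "TH (cd a) e = e" "TH (dm b) f = f" "isp [e,f]"
    "rres C a e \<in> M" "cd (rres C a e) = e" "lres C f b \<in> M" "dm (lres C f b) = f"
    "cprod C a b = cp (cp (rres C a e) (EP [e,f])) (lres C f b)"
    "cprod C a b \<in> M" "dm (cprod C a b) = dm (rres C a e)" "cd (cprod C a b) = cd (lres C f b)"
    "EP [e,f] \<in> M" "dm (EP [e,f]) = e" "cd (EP [e,f]) = f"
proof -
  have ca: "cd a \<in> Ob" and db: "dm b \<in> Ob" using a b cd_Ob dm_Ob by auto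
  show e: "e\<in>Ob" and f: "f\<in>Ob" unfolding e_def f_def using cl ca db by auto
  show ea: "TH (cd a) e = e" unfolding e_def using a4(2)[OF ca db] .
  show fb: "TH (dm b) f = f" unfolding f_def using thth[OF db ca] .
  have 1: "DE e f = e" unfolding e_def f_def using F_ef[OF ca db] .
  have 2: "TH f e = f" unfolding e_def f_def using F_ef2[OF ca db] .
  show ip: "isp [e,f]" using isp2[OF e f] 1 2 by simp
  show r1: "rres C a e \<in> M" "cd (rres C a e) = e" using rres[OF a e ea] by auto
  show l1: "lres C f b \<in> M" "dm (lres C f b) = f" using lres[OF b f fb] by auto
  show eq: "cprod C a b = cp (cp (rres C a e) (EP [e,f])) (lres C f b)"
    unfolding cprod_def e_def f_def Let_def ..
  show E: "EP [e,f] \<in> M" "dm (EP [e,f]) = e" "cd (EP [e,f]) = f" using ep[OF ip] by auto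
  have c1: "cp (rres C a e) (EP [e,f]) \<in> M" "dm (cp (rres C a e) (EP [e,f])) = dm (rres C a e)"
     "cd (cp (rres C a e) (EP [e,f])) = f"
    using cpM dm_cp cd_cp r1 E by auto
  show "cprod C a b \<in> M" "dm (cprod C a b) = dm (rres C a e)" "cd (cprod C a b) = cd (lres C f b)"
    unfolding eq using cpM dm_cp cd_cp c1 l1 by auto
qed

lemma pr_M: "a\<in>M \<Longrightarrow> b\<in>M \<Longrightarrow> cprod C a b \<in> M" by (rule pr_basic(11))

lemma pr_dm_le: assumes "a\<in>M" "b\<in>M" shows "TH (dm a) (dm (cprod C a b)) = dm (cprod C a b)"
  using pr_basic(12)[OF assms] rres_dm_le[OF assms(1) pr_basic(1)[OF assms] pr_basic(3)[OF assms]] by simp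
lemma pr_cd_le: assumes "a\<in>M" "b\<in>M" shows "TH (cd b) (cd (cprod C a b)) = cd (cprod C a b)"
  using pr_basic(13)[OF assms] lres_cd_le[OF assms(2) pr_basic(2)[OF assms] pr_basic(4)[OF assms]] by simp

lemma P1: assumes x: "x\<in>M" and c: "c\<in>M"
  shows "cprod C x c = cp (cprod C x (dm c)) (lres C (cd (cprod C x (dm c))) c)"
    "cd (cprod C x (dm c)) = TH (dm c) (cd x)"
proof -
  let ?q = "dm c"
  have q: "?q \<in> Ob" "?q \<in> M" "dm ?q = ?q" using dm_Ob c Ob_M Ob_dm by auto
  let ?e = "DE (cd x) ?q" and ?f = "TH ?q (cd x)"
  note B = pr_basic[OF x c]
  note B2 = pr_basic[OF x q(2), unfolded q(3)]
  have lf: "lres C ?f ?q = ?f" using lres_obj q(1) B(2) B(4) by blast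
  have c1: "cp (rres C x ?e) (EP [?e,?f]) \<in> M" "cd (cp (rres C x ?e) (EP [?e,?f])) = ?f"
    using cpM[OF B(6) B(14)] cd_cp[OF B(6) B(14)] B(7,15,16) by auto
  have w: "cprod C x ?q = cp (rres C x ?e) (EP [?e,?f])"
    unfolding B2(10) lf using cp_idr[OF c1(1)] c1(2) by simp
  have cw: "cd (cprod C x ?q) = ?f" using w c1(2) by simp
  show "cprod C x c = cp (cprod C x (dm c)) (lres C (cd (cprod C x (dm c))) c)"
    using B(10) w cw by simp
  show "cd (cprod C x (dm c)) = TH (dm c) (cd x)" using cw .
qed

lemma P1': assumes x: "x\<in>M" and c: "c\<in>M"
  shows "cprod C x c = cp (rres C x (dm (cprod C (cd x) c))) (cprod C (cd x) c)"
    "dm (cprod C (cd x) c) = DE (cd x) (dm c)"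
proof -
  let ?r = "cd x"
  have r: "?r \<in> Ob" "?r \<in> M" "cd ?r = ?r" using cd_Ob x Ob_M Ob_cd by auto
  let ?e = "DE ?r (dm c)" and ?f = "TH (dm c) ?r"
  note B = pr_basic[OF x c]
  note B2 = pr_basic[OF r(2) c, unfolded r(3)]
  have re: "rres C ?r ?e = ?e" using rres_obj r(1) B(1) B(3) by blast
  have w: "cprod C ?r c = cp (EP [?e,?f]) (lres C ?f c)"
    unfolding B2(10) re using cp_idl[OF B(14)] B(15) by simp
  have dw: "dm (cprod C ?r c) = ?e" unfolding w using dm_cp[OF B(14) B(8)] B(9) B(15,16) by simp
  show "cprod C x c = cp (rres C x (dm (cprod C (cd x) c))) (cprod C (cd x) c)"
    unfolding B(10) w using cp_assoc[OF B(6) B(14) B(8)] dm_cp[OF B(14) B(8)] B(7,9,15,16) by simp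
  show "dm (cprod C (cd x) c) = DE (cd x) (dm c)" using dw .
qed

lemma P2: assumes a: "a\<in>M" and y: "y\<in>M" and z: "z\<in>M" and yz: "cd y = dm z"
  shows "cprod C a (cp y z) = cp (cprod C a y) (lres C (cd (cprod C a y)) z)"
proof -
  have yzM: "cp y z \<in> M" "dm (cp y z) = dm y" using cpM dm_cp y z yz by auto
  let ?e = "DE (cd a) (dm y)" and ?f = "TH (dm y) (cd a)"
  note B = pr_basic[OF a y]
  note B2 = pr_basic[OF a yzM(1), unfolded yzM(2)]
  have lc: "lres C ?f (cp y z) = cp (lres C ?f y) (lres C (cd (lres C ?f y)) z)"
    using lres_cp[OF y z yz B(2) B(4)] .
  have l2: "lres C (cd (lres C ?f y)) z \<in> M" "dm (lres C (cd (lres C ?f y)) z) = cd (lres C ?f y)"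
  proof -
    have "TH (cd y) (cd (lres C ?f y)) = cd (lres C ?f y)" using lres_cd_le[OF y B(2) B(4)] .
    then have "TH (dm z) (cd (lres C ?f y)) = cd (lres C ?f y)" using yz by simp
    then show "lres C (cd (lres C ?f y)) z \<in> M" "dm (lres C (cd (lres C ?f y)) z) = cd (lres C ?f y)"
      using lres[OF z] cd_Ob B(8) by auto
  qed
  have c1: "cp (rres C a ?e) (EP [?e,?f]) \<in> M" "cd (cp (rres C a ?e) (EP [?e,?f])) = ?f"
    using cpM cd_cp B(6,7,14,15,16) by auto
  show ?thesis
    unfolding B2(10) B(10) lc
    using cp_assoc[OF c1(1) B(8) l2(1)] cd_cp[OF c1(1) B(8)] c1(2) B(9) l2(2) by simp
qed

lemma P2': assumes b: "b\<in>M" and y: "y\<in>M" and z: "z\<in>M" and yz: "cd y = dm z"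
  shows "cprod C (cp y z) b = cp (rres C y (dm (cprod C z b))) (cprod C z b)"
proof -
  have yzM: "cp y z \<in> M" "cd (cp y z) = cd z" using cpM cd_cp y z yz by auto
  let ?e = "DE (cd z) (dm b)" and ?f = "TH (dm b) (cd z)"
  note B = pr_basic[OF z b]
  note B2 = pr_basic[OF yzM(1) b, unfolded yzM(2)]
  have rc: "rres C (cp y z) ?e = cp (rres C y (dm (rres C z ?e))) (rres C z ?e)"
    using rres_cp[OF y z yz B(1) B(3)] .
  have r2: "rres C y (dm (rres C z ?e)) \<in> M" "cd (rres C y (dm (rres C z ?e))) = dm (rres C z ?e)"
  proof -
    have "TH (dm z) (dm (rres C z ?e)) = dm (rres C z ?e)" using rres_dm_le[OF z B(1) B(3)] .
    then have "TH (cd y) (dm (rres C z ?e)) = dm (rres C z ?e)" using yz by simp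
    then show "rres C y (dm (rres C z ?e)) \<in> M" "cd (rres C y (dm (rres C z ?e))) = dm (rres C z ?e)"
      using rres[OF y] dm_Ob B(6) by auto
  qed
  have c1: "cp (rres C z ?e) (EP [?e,?f]) \<in> M" "dm (cp (rres C z ?e) (EP [?e,?f])) = dm (rres C z ?e)"
     "cd (cp (rres C z ?e) (EP [?e,?f])) = ?f"
    using cpM cd_cp dm_cp B(6,7,14,15,16) by auto
  have "cp (cp (cp (rres C y (dm (rres C z ?e))) (rres C z ?e)) (EP [?e,?f])) (lres C ?f b)
      = cp (cp (rres C y (dm (rres C z ?e))) (cp (rres C z ?e) (EP [?e,?f]))) (lres C ?f b)"
    using cp_assoc[OF r2(1) B(6) B(14)] r2(2) B(7) B(15) by simp
  also have "\<dots> = cp (rres C y (dm (rres C z ?e))) (cp (cp (rres C z ?e) (EP [?e,?f])) (lres C ?f b))"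
    using cp_assoc[OF r2(1) c1(1) B(8)] r2(2) c1(2) c1(3) B(9) by simp
  finally have X: "cp (cp (cp (rres C y (dm (rres C z ?e))) (rres C z ?e)) (EP [?e,?f])) (lres C ?f b)
      = cp (rres C y (dm (rres C z ?e))) (cp (cp (rres C z ?e) (EP [?e,?f])) (lres C ?f b))" .
  show ?thesis unfolding B2(10) B(10) rc using X dm_cp[OF c1(1) B(8)] c1(2,3) B(9) by simp
qed

end

context pcpc begin

lemma ob_facts: "p\<in>Ob \<Longrightarrow> p\<in>M \<and> dm p = p \<and> cd p = p" using Ob_M Ob_dm Ob_cd by auto

lemma assoc_red3: assumes H: "\<And>p b s. p\<in>Ob \<Longrightarrow> b\<in>M \<Longrightarrow> s\<in>Ob \<Longrightarrow>
      cprod C (cprod C p b) s = cprod C p (cprod C b s)"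
  and a: "a\<in>M" and b: "b\<in>M" and q: "q\<in>Ob"
  shows "cprod C (cprod C a b) q = cprod C a (cprod C b q)"
proof -
  let ?p = "cd a"
  have p: "?p\<in>Ob" "?p\<in>M" using cd_Ob a Ob_M by auto
  have qM: "q\<in>M" using q Ob_M by auto
  let ?w = "cprod C ?p b"
  have w: "?w \<in> M" using pr_M p b by auto
  have dw: "dm ?w = DE ?p (dm b)" using P1'(2)[OF a b] .
  have dwO: "dm ?w \<in> Ob" "TH (cd a) (dm ?w) = dm ?w" using dm_Ob w dw a4(2) p dm_Ob b cl by auto
  let ?u = "rres C a (dm ?w)"
  have u: "?u\<in>M" "cd ?u = dm ?w" using rres[OF a dwO] by auto
  have 1: "cprod C a b = cp ?u ?w" using P1'(1)[OF a b] .
  have 2: "cprod C (cp ?u ?w) q = cp (rres C ?u (dm (cprod C ?w q))) (cprod C ?w q)"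
    using P2'[OF qM u(1) w u(2)] .
  have wq: "cprod C ?w q \<in> M" using pr_M w qM by auto
  have le1: "TH (dm ?w) (dm (cprod C ?w q)) = dm (cprod C ?w q)" using pr_dm_le[OF w qM] .
  have 3: "rres C ?u (dm (cprod C ?w q)) = rres C a (dm (cprod C ?w q))"
    using rres_rres[OF a dm_Ob[OF wq] dwO(1) le1 dwO(2)] .
  have bq: "cprod C b q \<in> M" using pr_M b qM by auto
  have 4: "cprod C a (cprod C b q) = cp (rres C a (dm (cprod C ?p (cprod C b q)))) (cprod C ?p (cprod C b q))"
    using P1'(1)[OF a bq] .
  have 5: "cprod C ?w q = cprod C ?p (cprod C b q)" using H[OF p(1) b q] .
  show ?thesis unfolding 1 2 3 unfolding 4 5 ..
qed

lemma assoc_red: assumes H: "\<And>p b s. p\<in>Ob \<Longrightarrow> b\<in>M \<Longrightarrow> s\<in>Ob \<Longrightarrow>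
      cprod C (cprod C p b) s = cprod C p (cprod C b s)"
  and a: "a\<in>M" and b: "b\<in>M" and c: "c\<in>M"
  shows "cprod C (cprod C a b) c = cprod C a (cprod C b c)"
proof -
  let ?q = "dm c"
  have q: "?q \<in> Ob" "?q\<in>M" using dm_Ob c Ob_M by auto
  let ?x = "cprod C a b"
  have x: "?x \<in> M" using pr_M a b by auto
  have 1: "cprod C ?x c = cp (cprod C ?x ?q) (lres C (cd (cprod C ?x ?q)) c)" using P1(1)[OF x c] .
  let ?y = "cprod C b ?q"
  have y: "?y \<in> M" using pr_M b q by auto
  have cy: "cd ?y = TH ?q (cd b)" using P1(2)[OF b c] .
  have cyO: "cd ?y \<in> Ob" "TH (dm c) (cd ?y) = cd ?y" using cy thth q cd_Ob b cl by auto
  let ?z = "lres C (cd ?y) c"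
  have z: "?z \<in> M" "dm ?z = cd ?y" using lres[OF c cyO] by auto
  have 2: "cprod C b c = cp ?y ?z" using P1(1)[OF b c] .
  have 3: "cprod C a (cp ?y ?z) = cp (cprod C a ?y) (lres C (cd (cprod C a ?y)) ?z)"
    using P2[OF a y z(1) z(2)[symmetric]] .
  have ay: "cprod C a ?y \<in> M" using pr_M a y by auto
  have le1: "TH (cd ?y) (cd (cprod C a ?y)) = cd (cprod C a ?y)" using pr_cd_le[OF a y] .
  have 4: "lres C (cd (cprod C a ?y)) ?z = lres C (cd (cprod C a ?y)) c"
    using lres_lres[OF c cd_Ob[OF ay] cyO(1) le1 cyO(2)] .
  have 5: "cprod C ?x ?q = cprod C a ?y" using assoc_red3[OF H a b q(1)] .
  show ?thesis unfolding 1 2 3 4 unfolding 5 ..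
qed

lemma C1_unf: "\<forall>a\<in>M.
       (\<forall>q\<in>Ob. proj_le TH q (cd a) \<longrightarrow> (\<forall>x\<in>Ob. Theta C (rres C a q) x = TH q (Theta C a x))) \<and>
       (\<forall>p\<in>Ob. proj_le TH p (dm a) \<longrightarrow> (\<forall>x\<in>Ob. Delta C (lres C p a) x = DE p (Delta C a x)))"
  using C1 unfolding condition_C1_def .
lemma C1_Theta: "a\<in>M \<Longrightarrow> q\<in>Ob \<Longrightarrow> TH (cd a) q = q \<Longrightarrow> x\<in>Ob \<Longrightarrow>
   Theta C (rres C a q) x = TH q (Theta C a x)"
  using C1_unf unfolding proj_le_def by (metis (no_types))
lemma C1_Delta: "a\<in>M \<Longrightarrow> p\<in>Ob \<Longrightarrow> TH (dm a) p = p \<Longrightarrow> x\<in>Ob \<Longrightarrow>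
   Delta C (lres C p a) x = DE p (Delta C a x)"
  using C1_unf unfolding proj_le_def by (metis (no_types))

end

context pcpc begin

lemma lam_eq: assumes p: "p\<in>Ob" and b: "b\<in>M" and s: "s\<in>Ob"
  shows "lambda_map C p b s = cprod C (cprod C p b) s"
proof -
  have pM: "p\<in>M" "cd p = p" "dm p = p" using ob_facts p by auto
  have sM: "s\<in>M" "cd s = s" "dm s = s" using ob_facts s by auto
  define q where "q = dm b"
  define e0 where "e0 = DE p q"
  define f0 where "f0 = TH q p"
  define b' where "b' = lres C f0 b"
  have q: "q\<in>Ob" unfolding q_def using dm_Ob b .
  note B = pr_basic[OF pM(1) b, unfolded pM(2), folded q_def, folded e0_def f0_def]
  have b': "b'\<in>M" "dm b' = f0" "LL b' b" unfolding b'_def using lres[OF b B(2)] B(4) q_def by auto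
  have re: "rres C p e0 = e0" using rres_obj[OF p B(1) B(3)] .
  have pb: "cprod C p b = cp (EP [e0,f0]) b'"
    unfolding B(10) re b'_def using cp_idl[OF B(14)] B(15) by simp
  define t where "t = cd b'"
  have tT: "t = Theta C b p" unfolding t_def b'_def f0_def q_def Theta_def ..
  have t: "t\<in>Ob" "TH (cd b) t = t" unfolding t_def b'_def using cd_Ob[OF b'(1)] lres_cd_le[OF b B(2)] B(4)
    by (auto simp: b'_def q_def)
  have pbM: "cprod C p b \<in> M" "cd (cprod C p b) = t"
    using pr_M[OF pM(1) b] pb cd_cp[OF B(14) b'(1)] B(16) b'(2) t_def by auto
  define f1 where "f1 = DE t s"
  define f where "f = TH s t"
  note B2 = pr_basic[OF pbM(1) sM(1), unfolded pbM(2) sM(3), folded f1_def f_def]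
  have lf: "lres C f s = f" using lres_obj[OF s B2(2) B2(4)] .
  have rf: "rres C (cprod C p b) f1 \<in> M" "cd (rres C (cprod C p b) f1) = f1" using B2(6,7) .
  have pbs: "cprod C (cprod C p b) s = cp (rres C (cprod C p b) f1) (EP [f1,f])"
    unfolding B2(10) lf using cp_idr[OF cpM[OF rf(1) B2(14)]] cd_cp[OF rf(1) B2(14)] rf(2) B2(15,16) by simp
  have f1t: "TH (cd b') f1 = f1" using B2(3) t_def by simp
  define y where "y = dm (rres C b' f1)"
  have rc: "rres C (cprod C p b) f1 = cp (rres C (EP [e0,f0]) y) (rres C b' f1)"
    unfolding pb y_def using rres_cp[OF B(14) b'(1) _ B2(1) f1t] B(16) b'(2) by simp
  define z where "z = Delta C b s"
  have z: "z\<in>Ob" "TH q z = z" unfolding z_def Delta_def q_def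
    using dm_Ob rres[OF b] rres_dm_le[OF b] cl cd_Ob[OF b] s a4(2) by auto
  have dd: "DE t f1 = f1" unfolding f1_def using dede t(1) s by simp
  have y1: "y = Delta C b' s" unfolding y_def Delta_def t_def[symmetric] f1_def ..
  have y2: "Delta C b' s = DE f0 z" unfolding b'_def z_def using C1_Delta[OF b B(2) _ s] B(4) q_def by simp
  have y: "y = DE f0 z" using y1 y2 by simp
  have yO: "y\<in>Ob" "TH f0 y = y" using y cl a4(2) B(2) z(1) by auto
  have r2: "rres C (EP [e0,f0]) y = EP [DE e0 y, y]" using ep2_rres(1)[OF B(1,2,5) yO] .
  have e: "DE e0 y = DE p z" unfolding y e0_def f0_def using lam_id[OF p q z(1) z(2)] .
  have lam: "lambda_map C p b s = cp (cp (EP [DE p z, DE f0 z]) (rres C b' f1)) (EP [f1, f])"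
    unfolding lambda_map_def Let_def z_def f1_def f_def tT[symmetric] b'_def f0_def q_def ..
  have r2': "rres C (EP [e0,f0]) (DE f0 z) = EP [DE p z, DE f0 z]" using r2 e y by simp
  show ?thesis unfolding lam pbs rc y r2' ..
qed

lemma rho_eq: assumes p: "p\<in>Ob" and b: "b\<in>M" and s: "s\<in>Ob"
  shows "rho_map C p b s = cprod C p (cprod C b s)"
proof -
  have pM: "p\<in>M" "cd p = p" "dm p = p" using ob_facts p by auto
  have sM: "s\<in>M" "cd s = s" "dm s = s" using ob_facts s by auto
  define r where "r = cd b"
  define e' where "e' = DE r s"
  define f' where "f' = TH s r"
  define b'' where "b'' = rres C b e'"
  have r: "r\<in>Ob" unfolding r_def using cd_Ob b .
  note B = pr_basic[OF b sM(1), unfolded sM(3), folded r_def, folded e'_def f'_def]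
  have lf: "lres C f' s = f'" using lres_obj[OF s B(2) B(4)] .
  have b'': "b''\<in>M" "cd b'' = e'" unfolding b''_def using B(6,7) by auto
  have bs: "cprod C b s = cp b'' (EP [e',f'])"
    unfolding B(10) lf b''_def using cp_idr[OF cpM[OF B(6) B(14)]] cd_cp[OF B(6) B(14)] B(7,15,16) by simp
  define z where "z = dm b''"
  have zD: "z = Delta C b s" unfolding z_def b''_def e'_def r_def Delta_def ..
  have z: "z\<in>Ob" unfolding z_def using dm_Ob b''(1) .
  have bsM: "cprod C b s \<in> M" "dm (cprod C b s) = z" using pr_M[OF b sM(1)] bs dm_cp[OF b''(1) B(14)] b''(2) B(15) z_def by auto
  define e where "e = DE p z"
  define e2 where "e2 = TH z p"
  note B2 = pr_basic[OF pM(1) bsM(1), unfolded pM(2) bsM(2), folded e_def e2_def]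
  have re: "rres C p e = e" using rres_obj[OF p B2(1) B2(3)] .
  have e2z: "TH (dm b'') e2 = e2" using B2(4) z_def by simp
  define mm where "mm = cd (lres C e2 b'')"
  have lc: "lres C e2 (cp b'' (EP [e',f'])) = cp (lres C e2 b'') (lres C mm (EP [e',f']))"
    unfolding mm_def using lres_cp[OF b''(1) B(14) _ B2(2) e2z] b''(2) B(15) by simp
  have mmT: "mm = Theta C b'' p" unfolding mm_def Theta_def e2_def z_def ..
  have w: "Theta C b p \<in> Ob" "TH r (Theta C b p) = Theta C b p" unfolding Theta_def r_def
    using cd_Ob lres[OF b] lres_cd_le[OF b] cl dm_Ob[OF b] p thth by auto
  have mm: "mm = TH e' (Theta C b p)" unfolding mmT b''_def using C1_Theta[OF b B(1) _ p] B(3) r_def by simp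
  have mmO: "mm\<in>Ob" "TH e' mm = mm" using mm cl B(1) w(1) thth by auto
  have l2: "lres C mm (EP [e',f']) = EP [mm, TH f' mm]" using ep2_lres(1)[OF B(1,2,5) mmO] .
  have f: "TH f' mm = TH s (Theta C b p)" unfolding mm f'_def e'_def using rho_id[OF s r w(1) w(2)] .
  have l1: "lres C e2 b'' \<in> M" "dm (lres C e2 b'') = e2" "cd (lres C e2 b'') = mm"
    using lres[OF b''(1) B2(2) e2z] mm_def by auto
  have pbs: "cprod C p (cprod C b s) = cp (EP [e,e2]) (cp (lres C e2 b'') (EP [mm, TH f' mm]))"
    unfolding B2(10) re using cp_idl[OF B2(14)] B2(15) bs lc l2 by simp
  have E2: "EP [mm, TH f' mm] \<in> M" "dm (EP [mm, TH f' mm]) = mm"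
    using ep[OF ep2_lres(2)[OF B(1,2,5) mmO]] by auto
  have rho: "rho_map C p b s = cp (cp (EP [e,e2]) (lres C e2 b'')) (EP [mm, TH s (Theta C b p)])"
    unfolding rho_map_def Let_def e_def e2_def zD mm r_def e'_def b''_def ..
  show ?thesis unfolding rho pbs f[symmetric]
    using cp_assoc[OF B2(14) l1(1) E2(1)] B2(16) l1(2,3) E2(2) by simp
qed

end

definition cpc2drc :: "'a cpc \<Rightarrow> 'a drc" where
  "cpc2drc C = \<lparr>drc_carrier = cpc_mor C,
     drc_mult = (\<lambda>a b. if a \<in> cpc_mor C \<and> b \<in> cpc_mor C then cprod C a b else undefined),
     drc_D = cpc_dom C, drc_R = cpc_cod C\<rparr>"

lemma is_cpc_pcpc: "is_cpc C \<Longrightarrow> pcpc C"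
  unfolding is_cpc_def by (simp add: pcpc_def)

locale ccpc = pcpc +
  assumes C2: "\<forall>b\<in>cpc_mor C. \<forall>p\<in>cpc_obj C. \<forall>s\<in>cpc_obj C. lambda_map C p b s = rho_map C p b s"
begin

lemma assoc3: "p\<in>Ob \<Longrightarrow> b\<in>M \<Longrightarrow> s\<in>Ob \<Longrightarrow> cprod C (cprod C p b) s = cprod C p (cprod C b s)"
  using C2 lam_eq rho_eq by metis

lemma pr_assoc: "a\<in>M \<Longrightarrow> b\<in>M \<Longrightarrow> c\<in>M \<Longrightarrow> cprod C (cprod C a b) c = cprod C a (cprod C b c)"
  using assoc_red[OF assoc3] by blast

lemma pr_le1: assumes p: "p\<in>Ob" and x: "x\<in>Ob" and le: "TH p x = x"
  shows "cprod C p x = x"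
proof -
  have pM: "p\<in>M" "cd p = p" "dm p = p" and xM: "x\<in>M" "cd x = x" "dm x = x" using ob_facts p x by auto
  have e: "DE p x = x" using le_de[OF x p le] .
  have f: "TH x p = x" using le_down[OF x p le] .
  have "cprod C p x = cp (cp (rres C p x) (EP [x,x])) (lres C x x)"
    unfolding cprod_def Let_def pM xM e f ..
  also have "\<dots> = x" using rres_obj[OF p x le] ep_pp[OF x] lres_obj[OF x x a1(1)[OF x]] cp_idl[OF xM(1)] xM
    by simp
  finally show ?thesis .
qed
lemma pr_le2: assumes p: "p\<in>Ob" and x: "x\<in>Ob" and le: "TH p x = x"
  shows "cprod C x p = x"
proof -
  have pM: "p\<in>M" "cd p = p" "dm p = p" and xM: "x\<in>M" "cd x = x" "dm x = x" using ob_facts p x by auto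
  have e: "DE x p = x" using le_down2[OF x p le] .
  have "cprod C x p = cp (cp (rres C x x) (EP [x,x])) (lres C x p)"
    unfolding cprod_def Let_def pM xM e le ..
  also have "\<dots> = x" using rres_obj[OF x x a1(1)[OF x]] ep_pp[OF x] lres_obj[OF p x le] cp_idl[OF xM(1)] xM
    by simp
  finally show ?thesis .
qed

lemma pr_dl: assumes a: "a\<in>M" shows "cprod C (dm a) a = a"
proof -
  have p: "dm a \<in> Ob" using dm_Ob a .
  have pM: "dm a\<in>M" "cd (dm a) = dm a" "dm (dm a) = dm a" using ob_facts p by auto
  have "cprod C (dm a) a = cp (cp (rres C (dm a) (dm a)) (EP [dm a, dm a])) (lres C (dm a) a)"
    unfolding cprod_def Let_def pM a1(1)[OF p] a1(2)[OF p] ..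
  also have "\<dots> = a" using rres_obj[OF p p a1(1)[OF p]] ep_pp[OF p] lres_dm[OF a] cp_idl[OF pM(1)] cp_idl[OF a] pM
    by simp
  finally show ?thesis .
qed
lemma pr_rr: assumes a: "a\<in>M" shows "cprod C a (cd a) = a"
proof -
  have p: "cd a \<in> Ob" using cd_Ob a .
  have pM: "cd a\<in>M" "cd (cd a) = cd a" "dm (cd a) = cd a" using ob_facts p by auto
  have "cprod C a (cd a) = cp (cp (rres C a (cd a)) (EP [cd a, cd a])) (lres C (cd a) (cd a))"
    unfolding cprod_def Let_def pM a1(1)[OF p] a1(2)[OF p] ..
  also have "\<dots> = a" using rres_cd[OF a] ep_pp[OF p] lres_obj[OF p p a1(1)[OF p]] cp_idr[OF a] cp_idl[OF pM(1)] pM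
    by simp
  finally show ?thesis .
qed

lemma pr_dm_eq: assumes a: "a\<in>M" and b: "b\<in>M" shows "dm (cprod C a b) = dm (cprod C a (dm b))"
proof -
  have bM: "dm b \<in> M" using dmM b .
  show ?thesis using pr_basic(12)[OF a b] pr_basic(12)[OF a bM] dmdm[OF b] by simp
qed
lemma pr_cd_eq: assumes a: "a\<in>M" and b: "b\<in>M" shows "cd (cprod C a b) = cd (cprod C (cd a) b)"
proof -
  have aM: "cd a \<in> M" using cdM a .
  show ?thesis using pr_basic(13)[OF a b] pr_basic(13)[OF aM b] cdcd[OF a] by simp
qed

lemma drc: "is_drc (cpc2drc C)"
proof -
  let ?m = "\<lambda>a b. if a \<in> M \<and> b \<in> M then cprod C a b else undefined"
  have m: "\<And>a b. a\<in>M \<Longrightarrow> b\<in>M \<Longrightarrow> ?m a b = cprod C a b" by simp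
  show ?thesis unfolding is_drc_def cpc2drc_def Let_def drc.simps
  proof (intro conjI ballI allI impI)
    fix a b c assume a: "a\<in>M" and b: "b\<in>M" and c: "c\<in>M"
    show "?m (?m a b) c = ?m a (?m b c)" using m pr_M pr_assoc a b c by simp
  next
    fix a b assume a: "a\<in>M" and b: "b\<in>M"
    show "?m a b \<in> M" using m pr_M a b by simp
    show "dm (?m a b) = dm (?m a (dm b))" using m pr_dm_eq a b dmM by simp
    show "cd (?m a b) = cd (?m (cd a) b)" using m pr_cd_eq a b cdM by simp
    have x: "dm (cprod C a b) \<in> Ob" "TH (dm a) (dm (cprod C a b)) = dm (cprod C a b)"
      using dm_Ob pr_M a b pr_dm_le by auto
    show "dm (?m a b) = ?m (?m (dm a) (dm (?m a b))) (dm a)"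
      using m a b pr_M dmM Ob_M pr_le1[OF dm_Ob[OF a] x] pr_le2[OF dm_Ob[OF a] x] x(1) by simp
    have y: "cd (cprod C a b) \<in> Ob" "TH (cd b) (cd (cprod C a b)) = cd (cprod C a b)"
      using cd_Ob pr_M a b pr_cd_le by auto
    show "cd (?m a b) = ?m (?m (cd b) (cd (?m a b))) (cd b)"
      using m a b pr_M cdM Ob_M pr_le1[OF cd_Ob[OF b] y] pr_le2[OF cd_Ob[OF b] y] y(1) by simp
  next
    fix a assume a: "a\<in>M"
    show "dm a \<in> M" "cd a \<in> M" using dmM cdM a by auto
    show "?m (dm a) a = a" "?m a (cd a) = a" using m a dmM cdM pr_dl pr_rr by auto
    show "cd (dm a) = dm a" "dm (cd a) = cd a" using cddm dmcd a by auto
  next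
    fix a b assume "a \<notin> M \<or> b \<notin> M"
    then show "?m a b = undefined" by auto
  next
    fix a assume "a\<notin>M"
    then show "dm a = undefined" "cd a = undefined" using dm_out cd_out by auto
  qed
qed

end

lemma is_cpc_ccpc: "is_cpc C \<Longrightarrow> ccpc C"
  unfolding is_cpc_def ccpc_def ccpc_axioms_def pcpc_def by simp


fun lprod :: "('a \<Rightarrow> 'a \<Rightarrow> 'a) \<Rightarrow> 'a list \<Rightarrow> 'a" where
  "lprod m [] = undefined"
| "lprod m [x] = x"
| "lprod m (x # y # zs) = m x (lprod m (y # zs))"

context drcl begin
definition "le p q \<longleftrightarrow> p = R (m p q)"
lemma le_iff1: "p\<in>PP \<Longrightarrow> q\<in>PP \<Longrightarrow> le p q \<longleftrightarrow> m p q = p \<and> m q p = p"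
  by (metis PP_R leP leP2 le_def)
lemma le_iff2: "p\<in>PP \<Longrightarrow> q\<in>PP \<Longrightarrow> le p q \<longleftrightarrow> p = D (m q p)"
  by (metis Dle2 PP_A PP_D PP_R le_def pa5)
lemma le_D: "a\<in>A \<Longrightarrow> b\<in>A \<Longrightarrow> le (D (m a b)) (D a)"
  by (simp add: Dle2 RD le_def mcl)
lemma le_R: "a\<in>A \<Longrightarrow> b\<in>A \<Longrightarrow> le (R (m a b)) (R b)"
  by (smt (verit, del_insts) R3 RRa Rcl Rr assoc le_def mcl)
lemma pb_rest: assumes "p\<in>PP" "b\<in>A" "le p (D b)" shows "D (m p b) = p"
proof -
  have "m p (D b) = p" using leP[OF assms(1) D_PP[OF assms(2)]] assms(3) le_def by blast
  then show ?thesis using DD[OF PP_A[OF assms(1)] assms(2)] PP_D[OF assms(1)] by simp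
qed
lemma bp_rest: "p\<in>PP \<Longrightarrow> b\<in>A \<Longrightarrow> le p (R b) \<Longrightarrow> R (m b p) = p"
  by (metis (lifting) ext PP_A RR R_PP le_def pa3)
lemma F_D: "p\<in>PP \<Longrightarrow> q\<in>PP \<Longrightarrow> D (m p q) = p \<Longrightarrow> qq\<in>PP \<Longrightarrow> le qq p \<Longrightarrow> D (m qq q) = qq"
  by (metis DD PP_A PP_D assoc leP le_def mcl)

lemma F_iff: assumes "p\<in>PP" "q\<in>PP" "D (m p q) = p" "R (m p q) = q" "qq\<in>PP" "le qq p"
  shows "m qq q = m qq (R (m qq q))"
proof -
  have "D (m qq q) = qq" using F_D assms by blast
  then show ?thesis using h1[OF assms(5) assms(2)] by simp
qed
lemma PP_alt: "PP = D ` A"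
proof
  show "PP \<subseteq> D ` A" unfolding PP_def by (auto simp: image_iff) (metis)
  show "D ` A \<subseteq> PP" using D_PP by auto
qed
lemma PP_alt2: "PP = {p\<in>A. R p = p}"
  unfolding PP_def using RD DR by (auto) (metis)+

abbreviation "thd \<equiv> (\<lambda>p q. R (m q p))"
abbreviation "ded \<equiv> (\<lambda>p q. D (m p q))"
abbreviation "pathd \<equiv> is_path PP thd ded"

lemma lprod_cons: "ys \<noteq> [] \<Longrightarrow> lprod m (x # ys) = m x (lprod m ys)"
  by (cases ys) auto

lemma lprod_A: "xs \<noteq> [] \<Longrightarrow> set xs \<subseteq> A \<Longrightarrow> lprod m xs \<in> A"
proof (induction xs)
  case Nil then show ?case by simp
next
  case (Cons x xs)
  show ?case
  proof (cases "xs = []")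
    case True then show ?thesis using Cons by simp
  next
    case False
    then have "lprod m xs \<in> A" using Cons by simp
    then show ?thesis using lprod_cons[OF False] mcl Cons(3) by simp
  qed
qed

lemma lprod_app: "xs \<noteq> [] \<Longrightarrow> ys \<noteq> [] \<Longrightarrow> set xs \<subseteq> A \<Longrightarrow> set ys \<subseteq> A \<Longrightarrow>
   lprod m (xs @ ys) = m (lprod m xs) (lprod m ys)"
proof (induction xs)
  case Nil then show ?case by simp
next
  case (Cons x xs)
  show ?case
  proof (cases "xs = []")
    case True then show ?thesis using Cons lprod_cons by simp
  next
    case False
    have IH: "lprod m (xs @ ys) = m (lprod m xs) (lprod m ys)" using Cons False by simp
    have A: "x\<in>A" "lprod m xs \<in> A" "lprod m ys \<in> A" using Cons False lprod_A by auto
    have "lprod m ((x # xs) @ ys) = m x (lprod m (xs @ ys))" using lprod_cons False by simp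
    also have "\<dots> = m (m x (lprod m xs)) (lprod m ys)" using IH assoc[OF A] by simp
    also have "\<dots> = m (lprod m (x # xs)) (lprod m ys)" using lprod_cons False by simp
    finally show ?thesis .
  qed
qed

lemma lpath_drc:
  "pathd xs \<Longrightarrow> q\<in>PP \<Longrightarrow> le q (hd xs) \<Longrightarrow>
     pathd (lpath thd q xs) \<and> hd (lpath thd q xs) = q \<and> lprod m (lpath thd q xs) = m q (lprod m xs)"
proof (induction xs arbitrary: q rule: induct_list012)
  case 1 then show ?case by (simp add: is_path_def)
next
  case (2 x)
  then have x: "x\<in>PP" by (simp add: is_path_def)
  have qx: "m q x = q" "R q = q" using le_iff1 2 x PP_R by auto
  show ?case using qx 2 by (simp add: is_path_def)
next
  case (3 x y zs)
  have xy: "x\<in>PP" "y\<in>PP" "set zs \<subseteq> PP" "D (m x y) = x" "R (m x y) = y"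
    using 3(3) by (auto simp: is_path_def proj_F_def)
  have pyz: "pathd (y # zs)" using 3(3) by (auto simp: is_path_def)
  have q: "q\<in>PP" "le q x" using 3 by auto
  have qx: "m q x = q" "R q = q" using le_iff1 q xy PP_R by auto
  define q' where "q' = R (m q y)"
  have q'1: "q'\<in>PP" unfolding q'_def using R_PP mcl PP_A q(1) xy(2) by blast
  have "le q' (R y)" unfolding q'_def using le_R PP_A q(1) xy(2) by blast
  then have q': "q'\<in>PP" "le q' y" using q'1 PP_R xy(2) by auto
  have lp: "lpath thd q (x # y # zs) = q # lpath thd q' (y # zs)"
  proof -
    have "R (m q' y) = q'" using q' le_iff1 xy PP_R by simp
    then show ?thesis using qx q'_def by simp
  qed
  note IH = "3.IH"(2)[OF pyz q'(1), unfolded list.sel(1), OF q'(2)]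
  have qq': "m q q' = m q y" using F_iff[OF xy(1,2,4,5) q] q'_def by simp
  have Dqq': "D (m q q') = q" using qq' F_D[OF xy(1,2,4) q] by simp
  have Rqq': "R (m q q') = q'" using qq' q'_def by simp
  have lpne: "lpath thd q' (y # zs) \<noteq> []" by simp
  have pl: "pathd (q # lpath thd q' (y # zs))"
  proof -
    obtain w where w: "lpath thd q' (y # zs) = q' # w" using IH by (cases "lpath thd q' (y # zs)") auto
    show ?thesis using IH w q q' Dqq' Rqq' by (auto simp: is_path_def proj_F_def)
  qed
  have sA: "set (lpath thd q' (y # zs)) \<subseteq> A" using IH PP_A by (auto simp: is_path_def)
  have yzA0: "set (y # zs) \<subseteq> A" using xy PP_A by auto
  have yzA: "set (y # zs) \<subseteq> A" "lprod m (y # zs) \<in> A" using yzA0 lprod_A[OF _ yzA0] by auto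
  have yW: "m y (lprod m (y # zs)) = lprod m (y # zs)"
  proof (cases zs)
    case Nil then show ?thesis using idem xy by simp
  next
    case (Cons z zs')
    have zA: "set (z # zs') \<subseteq> A" using yzA0 Cons by auto
    have A: "y\<in>A" "lprod m (z # zs') \<in> A" using xy PP_A lprod_A[OF _ zA] by auto
    have "m y (lprod m (y # zs)) = m (m y y) (lprod m (z # zs'))" using Cons assoc[OF A(1) A(1) A(2)] by simp
    then show ?thesis using idem xy Cons by simp
  qed
  have "lprod m (lpath thd q (x # y # zs)) = m q (m q' (lprod m (y # zs)))"
    using lp lprod_cons[OF lpne] IH by (simp del: lpath.simps)
  also have "\<dots> = m (m q q') (lprod m (y # zs))" using assoc q q' PP_A yzA by simp
  also have "\<dots> = m q (m y (lprod m (y # zs)))" using qq' assoc q xy PP_A yzA by simp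
  also have "\<dots> = m q (lprod m (y # zs))" using yW by simp
  also have "\<dots> = m (m q x) (lprod m (y # zs))" using qx by simp
  also have "\<dots> = m q (lprod m (x # y # zs))" using assoc q(1) xy(1) PP_A yzA by simp
  finally show ?case using lp pl by (simp del: lpath.simps)
qed

end

context drcl begin

lemma le_refl: "p\<in>PP \<Longrightarrow> le p p" using le_iff1 idem by simp
lemma le_trans: "p\<in>PP \<Longrightarrow> q\<in>PP \<Longrightarrow> r\<in>PP \<Longrightarrow> le p q \<Longrightarrow> le q r \<Longrightarrow> le p r"
proof -
  assume a: "p\<in>PP" "q\<in>PP" "r\<in>PP" "le p q" "le q r"
  have 1: "m p q = p" "m q p = p" "m q r = q" "m r q = q" using le_iff1 a by auto
  have "m p r = p" using assoc[of p q r] 1 a PP_A by metis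
  moreover have "m r p = p" using assoc[of r q p] 1 a PP_A by metis
  ultimately show ?thesis using le_iff1 a by simp
qed
lemma le_antisym: "p\<in>PP \<Longrightarrow> q\<in>PP \<Longrightarrow> le p q \<Longrightarrow> le q p \<Longrightarrow> p = q"
  using le_iff1 by metis

lemma cmp_D: "a\<in>A \<Longrightarrow> b\<in>A \<Longrightarrow> R a = D b \<Longrightarrow> D (m a b) = D a"
  using DD[of a b] Rr[of a] by simp
lemma cmp_R: "a\<in>A \<Longrightarrow> b\<in>A \<Longrightarrow> R a = D b \<Longrightarrow> R (m a b) = R b"
  using RR[of a b] Dl[of b] by simp

lemma idem_lprod: assumes x: "x\<in>PP" and zs: "set zs \<subseteq> A"
  shows "m x (lprod m (x # zs)) = lprod m (x # zs)"
proof (cases zs)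
  case Nil then show ?thesis using idem x by simp
next
  case (Cons z zs')
  have A: "x\<in>A" "lprod m zs \<in> A" using x PP_A lprod_A zs Cons by auto
  have "m x (lprod m (x # zs)) = m (m x x) (lprod m zs)" using Cons assoc[OF A(1) A(1) A(2)] by simp
  then show ?thesis using idem x Cons by simp
qed

lemma lprod_remdups: "set xs \<subseteq> PP \<Longrightarrow> lprod m (remdups_adj xs) = lprod m xs"
proof (induction xs rule: induct_list012)
  case 1 then show ?case by simp
next
  case (2 x) then show ?case by simp
next
  case (3 x y zs)
  have IH: "lprod m (remdups_adj (y # zs)) = lprod m (y # zs)" using 3 by simp
  have sA: "set (y # zs) \<subseteq> A" using 3(3) PP_A by auto
  show ?case
  proof (cases "x = y")
    case True
    then have "lprod m (remdups_adj (x # y # zs)) = lprod m (y # zs)" using IH by simp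
    also have "\<dots> = lprod m (x # y # zs)" using True idem_lprod[of y zs] 3(3) sA by simp
    finally show ?thesis .
  next
    case False
    have ne: "remdups_adj (y # zs) \<noteq> []" by simp
    have "lprod m (remdups_adj (x # y # zs)) = lprod m (x # remdups_adj (y # zs))" using False by simp
    also have "\<dots> = m x (lprod m (remdups_adj (y # zs)))" using lprod_cons[OF ne] .
    also have "\<dots> = lprod m (x # y # zs)" using IH by simp
    finally show ?thesis .
  qed
qed

lemma lprod_path: "pathd xs \<Longrightarrow> lprod m xs \<in> A \<and> D (lprod m xs) = hd xs \<and> R (lprod m xs) = last xs"
proof (induction xs rule: induct_list012)
  case 1 then show ?case by (simp add: is_path_def)
next
  case (2 x) then show ?case using PP_A PP_D PP_R by (simp add: is_path_def)
next
  case (3 x y zs)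
  have xy: "x\<in>PP" "y\<in>PP" "set zs \<subseteq> PP" "D (m x y) = x" "R (m x y) = y"
    using 3(3) by (auto simp: is_path_def proj_F_def)
  have pyz: "pathd (y # zs)" using 3(3) by (auto simp: is_path_def)
  note IH = "3.IH"(2)[OF pyz]
  let ?W = "lprod m (y # zs)"
  have W: "?W \<in> A" "D ?W = y" "R ?W = last (y # zs)" using IH by auto
  have yW: "m y ?W = ?W" using idem_lprod[of y zs] xy PP_A by auto
  have x: "x\<in>A" "y\<in>A" using xy PP_A by auto
  have e: "lprod m (x # y # zs) = m x ?W" by simp
  have 1: "lprod m (x # y # zs) \<in> A" using e mcl x W by simp
  have 2: "D (lprod m (x # y # zs)) = x" using e DD[OF x(1) W(1)] W(2) xy by simp
  have "m x ?W = m (m x y) ?W" using yW assoc[OF x(1) x(2) W(1)] by simp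
  then have "R (m x ?W) = R (m (R (m x y)) ?W)" using RR[OF mcl[OF x] W(1)] by simp
  then have 3: "R (lprod m (x # y # zs)) = last (x # y # zs)" using e xy yW W by simp
  show ?case using 1 2 3 by simp
qed

lemma lprod_rev: "xs \<noteq> [] \<Longrightarrow> set xs \<subseteq> A \<Longrightarrow> lprod (\<lambda>a b. m b a) (rev xs) = lprod m xs"
proof (induction xs)
  case Nil then show ?case by simp
next
  case (Cons x xs)
  interpret d: drcl A "\<lambda>a b. m b a" R D by (rule dual)
  show ?case
  proof (cases "xs = []")
    case True then show ?thesis by simp
  next
    case False
    have "lprod (\<lambda>a b. m b a) (rev (x # xs)) = lprod (\<lambda>a b. m b a) (rev xs @ [x])" by simp
    also have "\<dots> = m x (lprod (\<lambda>a b. m b a) (rev xs))"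
      using d.lprod_app[of "rev xs" "[x]"] False Cons by simp
    also have "\<dots> = lprod m (x # xs)" using Cons False lprod_cons by simp
    finally show ?thesis .
  qed
qed

lemma rpath_drc: assumes p: "pathd xs" and q: "q\<in>PP" and le: "le q (last xs)"
  shows "pathd (rpath ded q xs) \<and> last (rpath ded q xs) = q \<and> lprod m (rpath ded q xs) = m (lprod m xs) q"
proof -
  interpret d: drcl A "\<lambda>a b. m b a" R D by (rule dual)
  have PP': "d.PP = PP" unfolding d.PP_def using PP_alt2 by simp
  have path': "d.pathd (rev xs)" using p unfolding is_path_def PP' proj_F_def
    by (auto elim!: successively_mono)
  have lx: "last xs \<in> PP" using p by (auto simp: is_path_def)
  have le': "d.le q (hd (rev xs))" unfolding d.le_def using le le_iff2[OF q lx] p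
    by (simp add: is_path_def hd_rev)
  have q': "q\<in>d.PP" using q PP' by simp
  note L = d.lpath_drc[OF path' q' le']
  have rp: "rpath ded q xs = rev (lpath ded q (rev xs))" by (simp add: rpath_def)
  have A1: "set xs \<subseteq> A" "xs \<noteq> []" using p PP_A by (auto simp: is_path_def)
  have P1: "pathd (rpath ded q xs)" using L rp unfolding is_path_def PP' proj_F_def
    by (auto elim!: successively_mono)
  have ne: "lpath ded q (rev xs) \<noteq> []" using L by (auto simp: is_path_def)
  have sA: "set (lpath ded q (rev xs)) \<subseteq> A" using L PP' PP_A by (auto simp: is_path_def)
  have "lprod m (rpath ded q xs) = lprod (\<lambda>a b. m b a) (rev (rev (lpath ded q (rev xs))))"
    using lprod_rev[of "rev (lpath ded q (rev xs))"] rp ne sA by simp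
  also have "\<dots> = m (lprod (\<lambda>a b. m b a) (rev xs)) q" using L by simp
  also have "\<dots> = m (lprod m xs) q" using lprod_rev A1 by simp
  finally show ?thesis using P1 L rp by (simp add: last_rev)
qed

end

definition drc2cpc :: "'a drc \<Rightarrow> 'a cpc" where
  "drc2cpc S = (let A = drc_carrier S; m = drc_mult S; D = drc_D S; R = drc_R S; P = D ` A;
     th = (\<lambda>p q. if p \<in> P \<and> q \<in> P then R (m q p) else undefined);
     de = (\<lambda>p q. if p \<in> P \<and> q \<in> P then D (m p q) else undefined) in
    \<lparr>cpc_mor = A, cpc_dom = D, cpc_cod = R,
     cpc_comp = (\<lambda>a b. if a \<in> A \<and> b \<in> A \<and> R a = D b then m a b else undefined),
     cpc_lel = (\<lambda>a b. a \<in> A \<and> b \<in> A \<and> a = m (D a) b \<and> D a = R (m (D a) (D b))),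
     cpc_ler = (\<lambda>a b. a \<in> A \<and> b \<in> A \<and> a = m b (R a) \<and> R a = R (m (R a) (R b))),
     cpc_theta = th, cpc_delta = de,
     cpc_eps = (\<lambda>xs. if is_path P th de xs then lprod m xs else undefined)\<rparr>)"

locale drcs = drcl +
  assumes mout: "a \<notin> A \<or> b \<notin> A \<Longrightarrow> m a b = undefined"
  and Dout: "a \<notin> A \<Longrightarrow> D a = undefined" and Rout: "a \<notin> A \<Longrightarrow> R a = undefined"
begin

definition "Cs = drc2cpc \<lparr>drc_carrier = A, drc_mult = m, drc_D = D, drc_R = R\<rparr>"
definition "TH' = (\<lambda>p q. if p \<in> PP \<and> q \<in> PP then R (m q p) else undefined)"
definition "DE' = (\<lambda>p q. if p \<in> PP \<and> q \<in> PP then D (m p q) else undefined)"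

lemma Cs_mor[simp]: "cpc_mor Cs = A" unfolding Cs_def drc2cpc_def Let_def by simp
lemma Cs_dom[simp]: "cpc_dom Cs = D" unfolding Cs_def drc2cpc_def Let_def by simp
lemma Cs_cod[simp]: "cpc_cod Cs = R" unfolding Cs_def drc2cpc_def Let_def by simp
lemma Cs_comp: "cpc_comp Cs a b = (if a \<in> A \<and> b \<in> A \<and> R a = D b then m a b else undefined)"
  unfolding Cs_def drc2cpc_def Let_def by simp
lemma Cs_comp'[simp]: "a \<in> A \<Longrightarrow> b \<in> A \<Longrightarrow> R a = D b \<Longrightarrow> cpc_comp Cs a b = m a b"
  by (simp add: Cs_comp)
lemma Cs_lel: "cpc_lel Cs a b \<longleftrightarrow> a \<in> A \<and> b \<in> A \<and> a = m (D a) b \<and> le (D a) (D b)"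
  unfolding Cs_def drc2cpc_def Let_def le_def by simp
lemma Cs_ler: "cpc_ler Cs a b \<longleftrightarrow> a \<in> A \<and> b \<in> A \<and> a = m b (R a) \<and> le (R a) (R b)"
  unfolding Cs_def drc2cpc_def Let_def le_def by simp
lemma Cs_th[simp]: "cpc_theta Cs = TH'" unfolding Cs_def drc2cpc_def Let_def TH'_def PP_alt
  by (simp cong: if_cong)
lemma Cs_de[simp]: "cpc_delta Cs = DE'" unfolding Cs_def drc2cpc_def Let_def DE'_def PP_alt
  by (simp cong: if_cong)
lemma Cs_eps: "cpc_eps Cs xs = (if is_path PP TH' DE' xs then lprod m xs else undefined)"
  unfolding Cs_def drc2cpc_def Let_def TH'_def DE'_def PP_alt by (simp cong: if_cong)
lemma Cs_obj[simp]: "cpc_obj Cs = PP" unfolding cpc_obj_def using PP_alt by simp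

lemma TH'_PP[simp]: "p\<in>PP \<Longrightarrow> q\<in>PP \<Longrightarrow> TH' p q = R (m q p)" by (simp add: TH'_def)
lemma DE'_PP[simp]: "p\<in>PP \<Longrightarrow> q\<in>PP \<Longrightarrow> DE' p q = D (m p q)" by (simp add: DE'_def)

lemma path_eq: "is_path PP TH' DE' xs \<longleftrightarrow> pathd xs"
  unfolding is_path_def proj_F_def
  by (auto elim!: successively_mono simp: subset_iff)

lemma small: "small_category Cs"
  unfolding small_category_def Let_def Cs_mor Cs_dom Cs_cod
proof (intro conjI ballI allI impI)
  fix a assume a: "a\<in>A"
  show "D a \<in> A" "R a \<in> A" using a Dcl Rcl by auto
  show "D (D a) = D a" "R (D a) = D a" "D (R a) = R a" "R (R a) = R a" using a DDa RD DR RRa by auto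
  show "cpc_comp Cs (D a) a = a" "cpc_comp Cs a (R a) = a" using a Dcl Rcl RD DR Dl Rr by auto
next
  fix a b assume a: "a\<in>A" and b: "b\<in>A" and ab: "R a = D b"
  show "cpc_comp Cs a b \<in> A" "D (cpc_comp Cs a b) = D a" "R (cpc_comp Cs a b) = R b"
    using a b ab mcl cmp_D cmp_R by auto
next
  fix a b e assume a: "a\<in>A" and b: "b\<in>A" and e: "e\<in>A" and h: "R a = D b \<and> R b = D e"
  show "cpc_comp Cs (cpc_comp Cs a b) e = cpc_comp Cs a (cpc_comp Cs b e)"
    using a b e h mcl cmp_D cmp_R assoc by auto
next
  fix a assume "a\<notin>A"
  then show "D a = undefined" "R a = undefined" using Dout Rout by auto
next
  fix a b assume "\<not> (a \<in> A \<and> b \<in> A \<and> R a = D b)"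
  then show "cpc_comp Cs a b = undefined" unfolding Cs_comp by (rule if_not_P)
qed

lemma lel_refl: "x\<in>A \<Longrightarrow> cpc_lel Cs x x" unfolding Cs_lel using Dl le_refl D_PP by auto
lemma lel_antisym: "cpc_lel Cs x y \<Longrightarrow> cpc_lel Cs y x \<Longrightarrow> x = y"
proof -
  assume "cpc_lel Cs x y" "cpc_lel Cs y x"
  then have h: "x \<in> A" "y \<in> A" "x = m (D x) y" "le (D x) (D y)" "y = m (D y) x" "le (D y) (D x)"
    unfolding Cs_lel by auto
  then have "D x = D y" using le_antisym D_PP by blast
  then show "x = y" using h Dl by metis
qed
lemma lel_trans: "cpc_lel Cs x y \<Longrightarrow> cpc_lel Cs y z \<Longrightarrow> cpc_lel Cs x z"
proof -
  assume "cpc_lel Cs x y" "cpc_lel Cs y z"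
  then have h: "x \<in> A" "y \<in> A" "z\<in>A" "x = m (D x) y" "le (D x) (D y)" "y = m (D y) z" "le (D y) (D z)"
    unfolding Cs_lel by auto
  have l: "le (D x) (D z)" using h le_trans D_PP by blast
  have "m (D x) (D y) = D x" using h le_iff1 D_PP by blast
  then have "m (D x) z = x" using h assoc Dcl by metis
  then show "cpc_lel Cs x z" unfolding Cs_lel using h l by auto
qed
lemma lel_po: "partial_order_on_mor A (cpc_lel Cs)"
  unfolding partial_order_on_mor_def using lel_refl lel_antisym lel_trans Cs_lel by blast

lemma ler_refl: "x\<in>A \<Longrightarrow> cpc_ler Cs x x" unfolding Cs_ler using Rr le_refl R_PP by auto
lemma ler_antisym: "cpc_ler Cs x y \<Longrightarrow> cpc_ler Cs y x \<Longrightarrow> x = y"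
proof -
  assume "cpc_ler Cs x y" "cpc_ler Cs y x"
  then have h: "x \<in> A" "y \<in> A" "x = m y (R x)" "le (R x) (R y)" "y = m x (R y)" "le (R y) (R x)"
    unfolding Cs_ler by auto
  then have "R x = R y" using le_antisym R_PP by blast
  then show "x = y" using h Rr by metis
qed
lemma ler_trans: "cpc_ler Cs x y \<Longrightarrow> cpc_ler Cs y z \<Longrightarrow> cpc_ler Cs x z"
proof -
  assume "cpc_ler Cs x y" "cpc_ler Cs y z"
  then have h: "x \<in> A" "y \<in> A" "z\<in>A" "x = m y (R x)" "le (R x) (R y)" "y = m z (R y)" "le (R y) (R z)"
    unfolding Cs_ler by auto
  have l: "le (R x) (R z)" using h le_trans R_PP by blast
  have "m (R y) (R x) = R x" using h le_iff1 R_PP by blast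
  then have "m z (R x) = x" using h assoc Rcl by metis
  then show "cpc_ler Cs x z" unfolding Cs_ler using h l by auto
qed
lemma ler_po: "partial_order_on_mor A (cpc_ler Cs)"
  unfolding partial_order_on_mor_def using ler_refl ler_antisym ler_trans Cs_ler by blast

end

context drcs begin

lemma lel_D: assumes "cpc_lel Cs a b" shows "cpc_lel Cs (D a) (D b)"
proof -
  have h: "a\<in>A" "b\<in>A" "le (D a) (D b)" using assms Cs_lel by auto
  have "m (D a) (D b) = D a" using le_iff1 D_PP h by blast
  then show ?thesis unfolding Cs_lel using h Dcl DDa by auto
qed
lemma lel_R: assumes "cpc_lel Cs a b" shows "cpc_lel Cs (R a) (R b)"
proof -
  have h: "a\<in>A" "b\<in>A" "a = m (D a) b" "le (D a) (D b)" using assms Cs_lel by auto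
  have "le (R (m (D a) b)) (R b)" using le_R Dcl h by blast
  then have l: "le (R a) (R b)" using h by metis
  then have "m (R a) (R b) = R a" using le_iff1 R_PP h by blast
  then show ?thesis unfolding Cs_lel using h l Rcl DR by auto
qed
lemma ler_D: assumes "cpc_ler Cs a b" shows "cpc_ler Cs (D a) (D b)"
proof -
  have h: "a\<in>A" "b\<in>A" "a = m b (R a)" "le (R a) (R b)" using assms Cs_ler by auto
  have "le (D (m b (R a))) (D b)" using le_D Rcl h by blast
  then have l: "le (D a) (D b)" using h by metis
  then have "m (D b) (D a) = D a" using le_iff1 D_PP h by blast
  then show ?thesis unfolding Cs_ler using h l Dcl RD by auto
qed
lemma ler_R: assumes "cpc_ler Cs a b" shows "cpc_ler Cs (R a) (R b)"
proof -
  have h: "a\<in>A" "b\<in>A" "le (R a) (R b)" using assms Cs_ler by auto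
  have "m (R b) (R a) = R a" using le_iff1 R_PP h by blast
  then show ?thesis unfolding Cs_ler using h Rcl RRa by auto
qed

lemma lel_cp: assumes "cpc_lel Cs a b" "cpc_lel Cs e e'" "R a = D e" "R b = D e'"
  shows "cpc_lel Cs (cpc_comp Cs a e) (cpc_comp Cs b e')"
proof -
  have h: "a\<in>A" "b\<in>A" "a = m (D a) b" "le (D a) (D b)" "e\<in>A" "e'\<in>A" "e = m (D e) e'" "le (D e) (D e')"
    using assms Cs_lel by auto
  have c: "cpc_comp Cs a e = m a e" "cpc_comp Cs b e' = m b e'" using h assms by auto
  have "m a e = m a (m (R a) e')" using h(7) assms(3) by simp
  also have "\<dots> = m a e'" using assoc[OF h(1) Rcl[OF h(1)] h(6)] Rr[OF h(1)] by simp
  also have "\<dots> = m (D a) (m b e')" using assoc[OF Dcl[OF h(1)] h(2) h(6)] h(3) by simp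
  finally have 1: "m a e = m (D a) (m b e')" .
  have 2: "D (m a e) = D a" "D (m b e') = D b" using cmp_D h assms by auto
  have 3: "m a e \<in> A" "m b e' \<in> A" using mcl h by auto
  show ?thesis unfolding c Cs_lel using 1 2 3 h(4) by simp
qed
lemma ler_cp: assumes "cpc_ler Cs a b" "cpc_ler Cs e e'" "R a = D e" "R b = D e'"
  shows "cpc_ler Cs (cpc_comp Cs a e) (cpc_comp Cs b e')"
proof -
  have h: "a\<in>A" "b\<in>A" "a = m b (R a)" "le (R a) (R b)" "e\<in>A" "e'\<in>A" "e = m e' (R e)" "le (R e) (R e')"
    using assms Cs_ler by auto
  have c: "cpc_comp Cs a e = m a e" "cpc_comp Cs b e' = m b e'" using h assms by auto
  have "m a e = m (m b (D e)) e" using h(3) assms(3) by simp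
  also have "\<dots> = m b e" using assoc[OF h(2) Dcl[OF h(5)] h(5)] Dl[OF h(5)] by simp
  also have "\<dots> = m (m b e') (R e)" using assoc[OF h(2) h(6) Rcl[OF h(5)]] h(7) by simp
  finally have 1: "m a e = m (m b e') (R e)" .
  have 2: "R (m a e) = R e" "R (m b e') = R e'" using cmp_R h assms by auto
  have 3: "m a e \<in> A" "m b e' \<in> A" using mcl h by auto
  show ?thesis unfolding c Cs_ler using 1 2 3 h(8) by simp
qed

lemma lres_ex: assumes a: "a\<in>A" and p: "p\<in>PP" and le: "le p (D a)"
  shows "cpc_lel Cs (m p a) a" "D (m p a) = p" "cpc_lel Cs u a \<Longrightarrow> D u = p \<Longrightarrow> u = m p a"
proof -
  show D: "D (m p a) = p" using pb_rest p a le by blast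
  show "cpc_lel Cs (m p a) a" unfolding Cs_lel using D le a p PP_A mcl by auto
  show "cpc_lel Cs u a \<Longrightarrow> D u = p \<Longrightarrow> u = m p a" unfolding Cs_lel by auto
qed
lemma rres_ex: assumes a: "a\<in>A" and q: "q\<in>PP" and le: "le q (R a)"
  shows "cpc_ler Cs (m a q) a" "R (m a q) = q" "cpc_ler Cs v a \<Longrightarrow> R v = q \<Longrightarrow> v = m a q"
proof -
  show R: "R (m a q) = q" using bp_rest q a le by blast
  show "cpc_ler Cs (m a q) a" unfolding Cs_ler using R le a q PP_A mcl by auto
  show "cpc_ler Cs v a \<Longrightarrow> R v = q \<Longrightarrow> v = m a q" unfolding Cs_ler by auto
qed

lemma lel_PP: assumes p: "p\<in>PP" and q: "q\<in>PP" shows "cpc_lel Cs p q \<longleftrightarrow> le p q"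
proof
  assume "cpc_lel Cs p q" then show "le p q" unfolding Cs_lel PP_D[OF p] PP_D[OF q] by simp
next
  assume l: "le p q"
  then have "m p q = p" using le_iff1[OF p q] by simp
  then show "cpc_lel Cs p q" unfolding Cs_lel PP_D[OF p] PP_D[OF q] using l PP_A p q by simp
qed
lemma ler_PP: assumes p: "p\<in>PP" and q: "q\<in>PP" shows "cpc_ler Cs p q \<longleftrightarrow> le p q"
proof
  assume "cpc_ler Cs p q" then show "le p q" unfolding Cs_ler PP_R[OF p] PP_R[OF q] by simp
next
  assume l: "le p q"
  then have "m q p = p" using le_iff1[OF p q] by simp
  then show "cpc_ler Cs p q" unfolding Cs_ler PP_R[OF p] PP_R[OF q] using l PP_A p q by simp
qed
lemma projle_PP: "p\<in>PP \<Longrightarrow> q\<in>PP \<Longrightarrow> proj_le TH' p q \<longleftrightarrow> le p q"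
  unfolding proj_le_def le_def by simp

lemma lres_Cs: assumes "a\<in>A" "p\<in>PP" "le p (D a)" shows "lres Cs p a = m p a"
  unfolding lres_def Cs_dom
proof (rule the_equality)
  show "cpc_lel Cs (m p a) a \<and> D (m p a) = p" using lres_ex(1,2)[OF assms] by simp
  fix u assume "cpc_lel Cs u a \<and> D u = p" then show "u = m p a" using lres_ex(3)[OF assms] by blast
qed
lemma rres_Cs: assumes "a\<in>A" "q\<in>PP" "le q (R a)" shows "rres Cs a q = m a q"
  unfolding rres_def Cs_cod
proof (rule the_equality)
  show "cpc_ler Cs (m a q) a \<and> R (m a q) = q" using rres_ex(1,2)[OF assms] by simp
  fix u assume "cpc_ler Cs u a \<and> R u = q" then show "u = m a q" using rres_ex(3)[OF assms] by blast
qed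

lemma occ_l: "ordered_category_common Cs (cpc_lel Cs)"
  unfolding ordered_category_common_def Cs_mor Cs_dom Cs_cod
  using lel_po lel_D lel_R lel_cp by blast
lemma occ_r: "ordered_category_common Cs (cpc_ler Cs)"
  unfolding ordered_category_common_def Cs_mor Cs_dom Cs_cod
  using ler_po ler_D ler_R ler_cp by blast

lemma left: "left_ordered Cs"
  unfolding left_ordered_def Cs_obj Cs_mor Cs_dom
proof (intro conjI occ_l ballI impI)
  fix a p assume a: "a\<in>A" and p: "p\<in>PP" and l: "cpc_lel Cs p (D a)"
  have le: "le p (D a)" using lel_PP p D_PP a l by blast
  show "\<exists>!u. cpc_lel Cs u a \<and> D u = p" using lres_ex[OF a p le] by blast
qed
lemma right: "right_ordered Cs"
  unfolding right_ordered_def Cs_obj Cs_mor Cs_cod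
proof (intro conjI occ_r ballI impI)
  fix a q assume a: "a\<in>A" and q: "q\<in>PP" and l: "cpc_ler Cs q (R a)"
  have le: "le q (R a)" using ler_PP q R_PP a l by blast
  show "\<exists>!v. cpc_ler Cs v a \<and> R v = q" using rres_ex[OF a q le] by blast
qed
lemma bio: "biordered Cs"
  unfolding biordered_def using small left right lel_PP ler_PP by simp

lemma PA: "projection_algebra PP TH' DE'"
  unfolding projection_algebra_def
proof (intro conjI ballI)
  fix p q assume p: "p\<in>PP" and q: "q\<in>PP"
  have A: "p\<in>A" "q\<in>A" using p q PP_A by auto
  show "TH' p q \<in> PP" "DE' p q \<in> PP" using p q A R_PP D_PP mcl by auto
  have c: "R (m q p) \<in> PP" "D (m p q) \<in> PP" using A R_PP D_PP mcl by auto
  show "TH' (TH' p q) p = TH' p q" using p q c pa3 by simp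
  show "DE' (DE' p q) p = DE' p q" using p q c pa3' by simp
next
  fix p assume p: "p\<in>PP"
  show "TH' p p = p" "DE' p p = p" using p idem PP_R PP_D by auto
next
  fix p x assume p: "p\<in>PP" and x: "x\<in>PP"
  have A: "p\<in>A" "x\<in>A" using p x PP_A by auto
  have c: "R (m x p) \<in> PP" "D (m p x) \<in> PP" using A R_PP D_PP mcl by auto
  show "DE' p (TH' p x) = TH' p x" using p x c pa5 by simp
  show "TH' p (DE' p x) = DE' p x" using p x c pa5' by simp
next
  fix p q x assume p: "p\<in>PP" and q: "q\<in>PP" and x: "x\<in>PP"
  have A: "p\<in>A" "q\<in>A" "x\<in>A" using p q x PP_A by auto
  have c: "R (m q p) \<in> PP" "D (m p q) \<in> PP" "R (m x q) \<in> PP" "D (m q x) \<in> PP"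
     "R (m p q) \<in> PP" "D (m q p) \<in> PP" using A R_PP D_PP mcl by auto
  show "TH' (TH' p q) (TH' q x) = TH' p (TH' q x)" using p q x c pa4 by simp
  show "DE' (DE' p q) (DE' q x) = DE' p (DE' q x)" using p q x c pa4' by simp
  have c2: "R (m x (D (m q p))) \<in> PP" "D (m (R (m p q)) x) \<in> PP" using c A R_PP D_PP mcl PP_A by auto
  show "TH' p (TH' (DE' q p) x) = TH' p (TH' q x)" using p q x c c2 pa6 by simp
  show "DE' p (DE' (TH' q p) x) = DE' p (DE' q x)" using p q x c c2 pa6' by simp
qed

lemma weak: "weak_projection_category Cs"
  unfolding weak_projection_category_def Cs_obj Cs_th Cs_de
  using bio PA lel_PP ler_PP projle_PP by (auto simp: TH'_def DE'_def)

lemma Theta_Cs: assumes a: "a\<in>A" and x: "x\<in>PP" shows "Theta Cs a x = R (m x a)"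
proof -
  have Da: "D a \<in> PP" using D_PP a .
  have t: "TH' (D a) x = R (m x (D a))" using Da x by simp
  have le: "le (R (m x (D a))) (D a)" using le_R[OF PP_A[OF x] Dcl[OF a]] RD a by simp
  have tP: "R (m x (D a)) \<in> PP" using R_PP mcl PP_A x Dcl a by blast
  have "Theta Cs a x = R (m (R (m x (D a))) a)" unfolding Theta_def Cs_cod Cs_dom Cs_th t
    using lres_Cs[OF a tP le] by simp
  also have "\<dots> = R (m (m x (D a)) a)" using RR[OF mcl[OF PP_A[OF x] Dcl[OF a]] a] by simp
  also have "\<dots> = R (m x a)" using assoc[OF PP_A[OF x] Dcl[OF a] a] Dl[OF a] by simp
  finally show ?thesis .
qed
lemma Delta_Cs: assumes a: "a\<in>A" and x: "x\<in>PP" shows "Delta Cs a x = D (m a x)"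
proof -
  have Ra: "R a \<in> PP" using R_PP a .
  have t: "DE' (R a) x = D (m (R a) x)" using Ra x by simp
  have le: "le (D (m (R a) x)) (R a)" using le_D[OF Rcl[OF a] PP_A[OF x]] DR a by simp
  have tP: "D (m (R a) x) \<in> PP" using D_PP mcl PP_A x Rcl a by blast
  have "Delta Cs a x = D (m a (D (m (R a) x)))" unfolding Delta_def Cs_cod Cs_dom Cs_de t
    using rres_Cs[OF a tP le] by simp
  also have "\<dots> = D (m a (m (R a) x))" using DD[OF a mcl[OF Rcl[OF a] PP_A[OF x]]] by simp
  also have "\<dots> = D (m a x)" using assoc[OF a Rcl[OF a] PP_A[OF x]] Rr[OF a] by simp
  finally show ?thesis .
qed

lemma C1: "condition_C1 Cs"
  unfolding condition_C1_def Cs_obj Cs_mor Cs_th Cs_de Cs_cod Cs_dom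
proof (intro ballI conjI impI)
  fix a q x assume a: "a\<in>A" and q: "q\<in>PP" and l: "proj_le TH' q (R a)" and x: "x\<in>PP"
  have le: "le q (R a)" using projle_PP q R_PP a l by blast
  have mq: "m a q \<in> A" using mcl a PP_A q by blast
  have "Theta Cs (rres Cs a q) x = R (m x (m a q))" using rres_Cs[OF a q le] Theta_Cs[OF mq x] by simp
  also have "\<dots> = R (m (m x a) q)" using assoc[OF PP_A[OF x] a PP_A[OF q]] by simp
  also have "\<dots> = R (m (R (m x a)) q)" using RR[OF mcl[OF PP_A[OF x] a] PP_A[OF q]] by simp
  also have "\<dots> = TH' q (Theta Cs a x)" using Theta_Cs[OF a x] q R_PP mcl PP_A x a by simp
  finally show "Theta Cs (rres Cs a q) x = TH' q (Theta Cs a x)" .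
next
  fix a p x assume a: "a\<in>A" and p: "p\<in>PP" and l: "proj_le TH' p (D a)" and x: "x\<in>PP"
  have le: "le p (D a)" using projle_PP p D_PP a l by blast
  have mp: "m p a \<in> A" using mcl a PP_A p by blast
  have "Delta Cs (lres Cs p a) x = D (m (m p a) x)" using lres_Cs[OF a p le] Delta_Cs[OF mp x] by simp
  also have "\<dots> = D (m p (m a x))" using assoc[OF PP_A[OF p] a PP_A[OF x]] by simp
  also have "\<dots> = D (m p (D (m a x)))" using DD[OF PP_A[OF p] mcl[OF a PP_A[OF x]]] by simp
  also have "\<dots> = DE' p (Delta Cs a x)" using Delta_Cs[OF a x] p D_PP mcl PP_A x a by simp
  finally show "Delta Cs (lres Cs p a) x = DE' p (Delta Cs a x)" .
qed

end

context drcs begin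

lemma lpath_cong: "\<forall>p\<in>PP. \<forall>q\<in>PP. f p q = g p q \<and> g p q \<in> PP \<Longrightarrow> q\<in>PP \<Longrightarrow> set xs \<subseteq> PP \<Longrightarrow>
   lpath f q xs = lpath g q xs"
  by (induction xs arbitrary: q) auto

lemma lpath_TH': "q\<in>PP \<Longrightarrow> set xs \<subseteq> PP \<Longrightarrow> lpath TH' q xs = lpath thd q xs"
  by (rule lpath_cong) (auto intro: R_PP mcl PP_A)
lemma rpath_DE': "q\<in>PP \<Longrightarrow> set xs \<subseteq> PP \<Longrightarrow> rpath DE' q xs = rpath ded q xs"
  unfolding rpath_def by (subst lpath_cong[where g = ded]) (auto intro: D_PP mcl PP_A)

lemma eps_path: "pathd xs \<Longrightarrow> cpc_eps Cs xs = lprod m xs" by (simp add: Cs_eps path_eq)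

lemma pathd_app: assumes "pathd xs" "pathd ys" "last xs = hd ys" shows "pathd (xs @ tl ys)"
proof (cases "tl ys = []")
  case True then show ?thesis using assms by simp
next
  case False
  obtain y y2 ys' where ys: "ys = y # y2 # ys'" using False assms(2)
    by (cases ys; cases "tl ys") (auto simp: is_path_def)
  have "successively (proj_F thd ded) ys" using assms(2) by (simp add: is_path_def)
  then have P: "proj_F thd ded y y2" "successively (proj_F thd ded) (y2 # ys')" using ys by auto
  have xs: "xs \<noteq> []" "set xs \<subseteq> PP" "successively (proj_F thd ded) xs" using assms(1) by (auto simp: is_path_def)
  have "successively (proj_F thd ded) (xs @ (y2 # ys'))"
    unfolding successively_append_iff using P xs assms(3) ys by simp
  then show ?thesis using xs assms(2) ys by (auto simp: is_path_def)
qed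

lemma ev: "evaluation_map Cs"
  unfolding evaluation_map_def Let_def Cs_obj Cs_th Cs_de Cs_mor Cs_dom Cs_cod path_eq
proof (intro conjI allI impI ballI)
  fix xs assume p: "pathd xs"
  show "cpc_eps Cs xs \<in> A" "D (cpc_eps Cs xs) = hd xs" "R (cpc_eps Cs xs) = last xs"
    using eps_path[OF p] lprod_path[OF p] by auto
next
  fix xs ys assume h: "pathd xs \<and> pathd ys \<and> remdups_adj xs = remdups_adj ys"
  then have s: "set xs \<subseteq> PP" "set ys \<subseteq> PP" by (auto simp: is_path_def)
  have "lprod m xs = lprod m ys" using lprod_remdups[OF s(1)] lprod_remdups[OF s(2)] h by metis
  then show "cpc_eps Cs xs = cpc_eps Cs ys" using eps_path h by simp
next
  fix xs ys assume h: "pathd xs \<and> pathd ys \<and> last xs = hd ys"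
  have px: "pathd xs" and py: "pathd ys" and l: "last xs = hd ys" using h by auto
  have pa: "pathd (xs @ tl ys)" using pathd_app px py l .
  have X: "lprod m xs \<in> A" "R (lprod m xs) = last xs" using lprod_path[OF px] by auto
  have Y: "lprod m ys \<in> A" "D (lprod m ys) = hd ys" using lprod_path[OF py] by auto
  have comp: "cpc_comp Cs (lprod m xs) (lprod m ys) = m (lprod m xs) (lprod m ys)"
    using X Y l by simp
  have sx: "xs \<noteq> []" "set xs \<subseteq> A" using px PP_A by (auto simp: is_path_def)
  have sy: "ys \<noteq> []" "set ys \<subseteq> A" using py PP_A by (auto simp: is_path_def)
  have "lprod m (xs @ tl ys) = m (lprod m xs) (lprod m ys)"
  proof (cases "tl ys = []")
    case True
    then have "ys = [hd ys]" using sy by (cases ys) auto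
    then have "lprod m ys = hd ys" by (metis lprod.simps(2))
    moreover have "m (lprod m xs) (hd ys) = lprod m xs" using Rr[OF X(1)] X(2) l by simp
    ultimately show ?thesis using True by simp
  next
    case False
    have ys: "ys = hd ys # tl ys" using sy by simp
    have tA: "set (tl ys) \<subseteq> A" using sy by (cases ys) auto
    have 1: "lprod m (xs @ tl ys) = m (lprod m xs) (lprod m (tl ys))" using lprod_app sx False tA by blast
    have 2: "lprod m ys = m (hd ys) (lprod m (tl ys))" using lprod_cons[OF False, of "hd ys"] ys by simp
    have hA: "hd ys \<in> A" "lprod m (tl ys) \<in> A" using sy lprod_A[OF False tA] by auto
    have "m (lprod m xs) (lprod m ys) = m (m (lprod m xs) (hd ys)) (lprod m (tl ys))"
      using 2 assoc[OF X(1) hA] by simp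
    also have "\<dots> = m (lprod m xs) (lprod m (tl ys))" using Rr[OF X(1)] X(2) l by simp
    finally show ?thesis using 1 by simp
  qed
  then show "cpc_eps Cs (xs @ tl ys) = cpc_comp Cs (cpc_eps Cs xs) (cpc_eps Cs ys)"
    using eps_path[OF pa] eps_path[OF px] eps_path[OF py] comp by simp
next
  fix p assume p: "p\<in>PP"
  have "pathd [p]" using p by (simp add: is_path_def)
  then show "cpc_eps Cs [p] = p" using eps_path by simp
next
  fix xs q assume p: "pathd xs" and q: "q\<in>PP" and l: "proj_le TH' q (hd xs)"
  have hx: "hd xs \<in> PP" "set xs \<subseteq> PP" using p by (auto simp: is_path_def)
  have le: "le q (hd xs)" using projle_PP[OF q hx(1)] l by simp
  note L = lpath_drc[OF p q le]
  have lp: "lpath TH' q xs = lpath thd q xs" using lpath_TH' q hx by simp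
  have E: "cpc_eps Cs (lpath TH' q xs) = m q (lprod m xs)" using lp L eps_path by simp
  have X: "lprod m xs \<in> A" "D (lprod m xs) = hd xs" using lprod_path[OF p] by auto
  show "cpc_lel Cs (cpc_eps Cs (lpath TH' q xs)) (cpc_eps Cs xs)"
    using lres_ex(1)[OF X(1) q] X(2) le E eps_path[OF p] by simp
next
  fix xs q assume p: "pathd xs" and q: "q\<in>PP" and l: "proj_le TH' q (last xs)"
  have hx: "last xs \<in> PP" "set xs \<subseteq> PP" using p by (auto simp: is_path_def)
  have le: "le q (last xs)" using projle_PP[OF q hx(1)] l by simp
  note L = rpath_drc[OF p q le]
  have lp: "rpath DE' q xs = rpath ded q xs" using rpath_DE' q hx by simp
  have E: "cpc_eps Cs (rpath DE' q xs) = m (lprod m xs) q" using lp L eps_path by simp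
  have X: "lprod m xs \<in> A" "R (lprod m xs) = last xs" using lprod_path[OF p] by auto
  show "cpc_ler Cs (cpc_eps Cs (rpath DE' q xs)) (cpc_eps Cs xs)"
    using rres_ex(1)[OF X(1) q] X(2) le E eps_path[OF p] by simp
next
  fix xs assume "\<not> pathd xs"
  then show "cpc_eps Cs xs = undefined" by (simp add: Cs_eps path_eq)
qed

lemma pcpc: "pcpc Cs"
  unfolding pcpc_def projection_category_def using weak C1 ev by simp

lemma cprod_Cs: assumes a: "a\<in>A" and b: "b\<in>A" shows "cprod Cs a b = m a b"
proof -
  interpret P: pcpc Cs by (rule pcpc)
  define e where "e = D (m (R a) (D b))"
  define f where "f = R (m (R a) (D b))"
  have Ra: "R a \<in> PP" and Db: "D b \<in> PP" using R_PP D_PP a b by auto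
  have e1: "DE' (R a) (D b) = e" "TH' (D b) (R a) = f" unfolding e_def f_def using Ra Db by auto
  have eP: "e \<in> PP" "f \<in> PP" unfolding e_def f_def using R_PP D_PP mcl Rcl Dcl a b by auto
  have le1: "le e (R a)" unfolding e_def using le_D[OF Rcl[OF a] Dcl[OF b]] DR a by simp
  have le2: "le f (D b)" unfolding f_def using le_R[OF Rcl[OF a] Dcl[OF b]] RD b by simp
  have pe: "pathd [e, f]" using P.pr_basic(5)[of a b] a b e1 path_eq by simp
  have c: "cprod Cs a b = cpc_comp Cs (cpc_comp Cs (rres Cs a e) (cpc_eps Cs [e,f])) (lres Cs f b)"
    unfolding cprod_def Let_def Cs_dom Cs_cod Cs_th Cs_de e1 ..
  have r: "rres Cs a e = m a e" using rres_Cs[OF a eP(1) le1] .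
  have l: "lres Cs f b = m f b" using lres_Cs[OF b eP(2) le2] .
  have E: "cpc_eps Cs [e,f] = m e f" using eps_path[OF pe] by simp
  have eA: "e\<in>A" "f\<in>A" using eP PP_A by auto
  have R1: "R (m a e) = e" using bp_rest eP a le1 by blast
  have D1: "D (m e f) = e" "R (m e f) = f" using lprod_path[OF pe] by auto
  have D2: "D (m f b) = f" using pb_rest eP b le2 by blast
  have c1: "cpc_comp Cs (m a e) (m e f) = m (m a e) (m e f)" using R1 D1 mcl a eA by simp
  have c2: "cpc_comp Cs (m (m a e) (m e f)) (m f b) = m (m (m a e) (m e f)) (m f b)"
    using D1 D2 mcl a b eA cmp_R R1 by simp
  have ef: "m e f = m (R a) (D b)" unfolding e_def f_def using h1[OF Ra Db] by simp
  have ee: "m e e = e" "m f f = f" using idem eP by auto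
  have "m (m (m a e) (m e f)) (m f b) = m (m a (m e f)) (m f b)"
    using assoc[OF a eA(1) mcl[OF eA]] assoc[OF eA(1) eA(1) eA(2)] ee by simp
  also have "\<dots> = m a (m (m e f) b)"
    using assoc[OF a mcl[OF eA] mcl[OF eA(2) b]] assoc[OF mcl[OF eA] eA(2) b] assoc[OF eA(1) eA(2) eA(2)] ee by simp
  also have "\<dots> = m a (m (m (R a) (D b)) b)" using ef by simp
  also have "\<dots> = m a (m (R a) (m (D b) b))" using assoc[OF Rcl[OF a] Dcl[OF b] b] by simp
  also have "\<dots> = m (m a (R a)) b" using Dl[OF b] assoc[OF a Rcl[OF a] b] by simp
  also have "\<dots> = m a b" using Rr[OF a] by simp
  finally show ?thesis using c r l E c1 c2 by simp
qed

lemma is_cpc: "is_cpc Cs"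
proof -
  interpret P: pcpc Cs by (rule pcpc)
  have "\<forall>b\<in>A. \<forall>p\<in>PP. \<forall>s\<in>PP. lambda_map Cs p b s = rho_map Cs p b s"
  proof (intro ballI)
    fix b p s assume b: "b\<in>A" and p: "p\<in>PP" and s: "s\<in>PP"
    have pA: "p\<in>A" "s\<in>A" using p s PP_A by auto
    have "lambda_map Cs p b s = m (m p b) s"
      using P.lam_eq[of p b s] p b s cprod_Cs mcl pA by simp
    also have "\<dots> = m p (m b s)" using assoc pA b by simp
    also have "\<dots> = rho_map Cs p b s" using P.rho_eq[of p b s] p b s cprod_Cs mcl pA by simp
    finally show "lambda_map Cs p b s = rho_map Cs p b s" .
  qed
  then show ?thesis unfolding is_cpc_def using weak C1 ev by (simp add: projection_category_def)
qed

end

context pcpc begin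

lemma cprod_comp: assumes a: "a\<in>M" and b: "b\<in>M" and ab: "cd a = dm b" shows "cprod C a b = cp a b"
proof -
  let ?r = "cd a"
  have r: "?r \<in> Ob" using cd_Ob a .
  have e: "DE (cd a) (dm b) = ?r" "TH (dm b) (cd a) = ?r" using ab a1 r by auto
  have "cprod C a b = cp (cp (rres C a ?r) (EP [?r, ?r])) (lres C ?r b)"
    unfolding cprod_def Let_def e ..
  also have "\<dots> = cp a b" using rres_cd[OF a] ep_pp[OF r] lres_dm[OF b] ab cp_idr[OF a] by simp
  finally show ?thesis .
qed

lemma cprod_obj: assumes p: "p\<in>Ob" and q: "q\<in>Ob"
  shows "cprod C p q = EP [DE p q, TH q p]" "dm (cprod C p q) = DE p q" "cd (cprod C p q) = TH q p"
proof -
  have pM: "p\<in>M" "cd p = p" "dm p = p" and qM: "q\<in>M" "cd q = q" "dm q = q" using ob_facts p q by auto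
  note B = pr_basic[OF pM(1) qM(1), unfolded pM(2) qM(3)]
  have "cprod C p q = cp (cp (DE p q) (EP [DE p q, TH q p])) (TH q p)"
    using B(10) rres_obj[OF p B(1) B(3)] lres_obj[OF q B(2) B(4)] by simp
  also have "\<dots> = EP [DE p q, TH q p]" using cp_idl[OF B(14)] B(15) cp_idr[OF B(14)] B(16) by simp
  finally show 1: "cprod C p q = EP [DE p q, TH q p]" .
  show "dm (cprod C p q) = DE p q" "cd (cprod C p q) = TH q p" using 1 B(15,16) by auto
qed

lemma cprod_lres: assumes b: "b\<in>M" and p: "p\<in>Ob" and le: "TH (dm b) p = p"
  shows "cprod C p b = lres C p b"
proof -
  have pM: "p\<in>M" "cd p = p" "dm p = p" using ob_facts p by auto
  have q: "dm b \<in> Ob" using dm_Ob b .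
  have e: "DE p (dm b) = p" using le_down2[OF p q le] .
  have "cprod C p b = cp (cp (rres C p p) (EP [p, p])) (lres C p b)"
    unfolding cprod_def Let_def pM e le ..
  also have "\<dots> = lres C p b"
  proof -
    have X: "cp p (lres C p b) = lres C p b" using cp_idl[OF lres(3)[OF b p le]] lres(2)[OF b p le] by simp
    have Y: "cp p p = p" using cp_idl[OF pM(1)] pM by simp
    show ?thesis using X Y rres_obj[OF p p a1(1)[OF p]] ep_pp[OF p] by simp
  qed
  finally show ?thesis .
qed

lemma cprod_rres: assumes b: "b\<in>M" and q: "q\<in>Ob" and le: "TH (cd b) q = q"
  shows "cprod C b q = rres C b q"
proof -
  have qM: "q\<in>M" "cd q = q" "dm q = q" using ob_facts q by auto
  have r: "cd b \<in> Ob" using cd_Ob b .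
  have e: "DE (cd b) q = q" using le_de[OF q r le] .
  have f: "TH q (cd b) = q" using le_down[OF q r le] .
  have "cprod C b q = cp (cp (rres C b q) (EP [q, q])) (lres C q q)"
    unfolding cprod_def Let_def qM e f ..
  also have "\<dots> = rres C b q"
  proof -
    have X: "cp (rres C b q) q = rres C b q" using cp_idr[OF rres(3)[OF b q le]] rres(2)[OF b q le] by simp
    show ?thesis using X ep_pp[OF q] lres_obj[OF q q a1(1)[OF q]] by simp
  qed
  finally show ?thesis .
qed

lemma lprod_EP: "isp xs \<Longrightarrow> lprod (cprod C) xs = EP xs"
proof (induction xs rule: induct_list012)
  case 1 then show ?case by (simp add: is_path_def)
next
  case (2 x) then show ?case using ep1 by (simp add: is_path_def)
next
  case (3 x y zs)
  have xy: "x\<in>Ob" "y\<in>Ob" "proj_F TH DE x y" using 3(3) by (auto simp: is_path_def)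
  have p2: "isp [x,y]" using xy by (simp add: is_path_def)
  have pyz: "isp (y # zs)" using 3(3) by (auto simp: is_path_def)
  have IH: "lprod (cprod C) (y # zs) = EP (y # zs)" using "3.IH"(2)[OF pyz] .
  have W: "EP (y # zs) \<in> M" "dm (EP (y # zs)) = y" using ep[OF pyz] by auto
  have F: "DE x y = x" "TH y x = y" using xy(3) by (auto simp: proj_F_def)
  have xM: "x\<in>M" "cd x = x" "dm x = x" using ob_facts xy by auto
  have "cprod C x (EP (y # zs)) = cp (cp (rres C x x) (EP [x, y])) (lres C y (EP (y # zs)))"
    unfolding cprod_def Let_def xM W(2) F ..
  also have "\<dots> = cp (EP [x,y]) (EP (y # zs))"
  proof -
    have X: "cp x (EP [x,y]) = EP [x,y]" using cp_idl[OF ep(1)[OF p2]] ep(2)[OF p2] by simp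
    show ?thesis using X rres_obj[OF xy(1) xy(1) a1(1)[OF xy(1)]] lres_dm[OF W(1)] W(2) by simp
  qed
  also have "\<dots> = EP ([x,y] @ tl (y # zs))" using ep_app[OF p2 pyz] by simp
  finally show ?case using IH by simp
qed

lemma hom_lres: assumes h: "\<phi> \<in> cpc_hom C C'" and pc': "pcpc C'"
  and a: "a\<in>M" and p: "p\<in>Ob" and le: "TH (dm a) p = p"
  shows "\<phi> (lres C p a) = lres C' (\<phi> p) (\<phi> a)"
proof -
  interpret Q: pcpc C' by (rule pc')
  have u: "LL (lres C p a) a" "dm (lres C p a) = p" "lres C p a \<in> M" using lres[OF a p le] by auto
  have hu: "cpc_lel C' (\<phi> (lres C p a)) (\<phi> a)" using h u(1) unfolding cpc_hom_def by blast
  have "cpc_dom C' (\<phi> (lres C p a)) = \<phi> (dm (lres C p a))" using h u(3) unfolding cpc_hom_def by auto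
  then have "cpc_dom C' (\<phi> (lres C p a)) = \<phi> p" using u(2) by simp
  then show ?thesis using Q.lres_uniq[OF hu] by simp
qed
lemma hom_rres: assumes h: "\<phi> \<in> cpc_hom C C'" and pc': "pcpc C'"
  and a: "a\<in>M" and q: "q\<in>Ob" and le: "TH (cd a) q = q"
  shows "\<phi> (rres C a q) = rres C' (\<phi> a) (\<phi> q)"
proof -
  interpret Q: pcpc C' by (rule pc')
  have u: "LR (rres C a q) a" "cd (rres C a q) = q" "rres C a q \<in> M" using rres[OF a q le] by auto
  have hu: "cpc_ler C' (\<phi> (rres C a q)) (\<phi> a)" using h u(1) unfolding cpc_hom_def by blast
  have "cpc_cod C' (\<phi> (rres C a q)) = \<phi> (cd (rres C a q))" using h u(3) unfolding cpc_hom_def by auto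
  then have "cpc_cod C' (\<phi> (rres C a q)) = \<phi> q" using u(2) by simp
  then show ?thesis using Q.rres_uniq[OF hu] by simp
qed

lemma hom_cprod: assumes h: "\<phi> \<in> cpc_hom C C'" and pc': "pcpc C'" and a: "a\<in>M" and b: "b\<in>M"
  shows "\<phi> (cprod C a b) = cprod C' (\<phi> a) (\<phi> b)"
proof -
  interpret Q: pcpc C' by (rule pc')
  have H: "\<phi> \<in> M \<rightarrow>\<^sub>E cpc_mor C'"
    "\<And>a. a\<in>M \<Longrightarrow> \<phi> (dm a) = cpc_dom C' (\<phi> a) \<and> \<phi> (cd a) = cpc_cod C' (\<phi> a)"
    "\<And>a b. a\<in>M \<Longrightarrow> b\<in>M \<Longrightarrow> cd a = dm b \<Longrightarrow> \<phi> (cp a b) = cpc_comp C' (\<phi> a) (\<phi> b)"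
    "\<And>p q. p\<in>Ob \<Longrightarrow> q\<in>Ob \<Longrightarrow> \<phi> (TH p q) = cpc_theta C' (\<phi> p) (\<phi> q) \<and> \<phi> (DE p q) = cpc_delta C' (\<phi> p) (\<phi> q)"
    "\<And>xs. isp xs \<Longrightarrow> cpc_eps C' (map \<phi> xs) = \<phi> (EP xs)"
    using h unfolding cpc_hom_def by auto
  note B = pr_basic[OF a b]
  let ?e = "DE (cd a) (dm b)" and ?f = "TH (dm b) (cd a)"
  have 1: "\<phi> ?e = cpc_delta C' (cpc_cod C' (\<phi> a)) (cpc_dom C' (\<phi> b))"
    using H(4)[OF cd_Ob[OF a] dm_Ob[OF b]] H(2) a b by simp
  have 2: "\<phi> ?f = cpc_theta C' (cpc_dom C' (\<phi> b)) (cpc_cod C' (\<phi> a))"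
    using H(4)[OF dm_Ob[OF b] cd_Ob[OF a]] H(2) a b by simp
  have r: "\<phi> (rres C a ?e) = rres C' (\<phi> a) (\<phi> ?e)" using hom_rres[OF h pc' a B(1) B(3)] .
  have l: "\<phi> (lres C ?f b) = lres C' (\<phi> ?f) (\<phi> b)" using hom_lres[OF h pc' b B(2) B(4)] .
  have E: "\<phi> (EP [?e, ?f]) = cpc_eps C' [\<phi> ?e, \<phi> ?f]" using H(5)[OF B(5)] by simp
  have c1: "\<phi> (cp (rres C a ?e) (EP [?e, ?f])) = cpc_comp C' (\<phi> (rres C a ?e)) (\<phi> (EP [?e, ?f]))"
    using H(3)[OF B(6) B(14)] B(7) B(15) by simp
  have c2: "\<phi> (cp (cp (rres C a ?e) (EP [?e, ?f])) (lres C ?f b)) =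
      cpc_comp C' (\<phi> (cp (rres C a ?e) (EP [?e, ?f]))) (\<phi> (lres C ?f b))"
    using H(3)[OF cpM[OF B(6) B(14)] B(8)] cd_cp[OF B(6) B(14)] B(7,9,15,16) by simp
  show ?thesis unfolding B(10) c2 c1 r l E 1 2 cprod_def Let_def ..
qed

end

lemma drcs_of: "is_drc S \<Longrightarrow> drcs (drc_carrier S) (drc_mult S) (drc_D S) (drc_R S)"
  unfolding is_drc_def Let_def drcs_def drcs_axioms_def drcl_def by blast

lemma drc_eta: "S = \<lparr>drc_carrier = drc_carrier S, drc_mult = drc_mult S, drc_D = drc_D S, drc_R = drc_R S\<rparr>"
  by (cases S) simp
lemma cpc_eta: "C = \<lparr>cpc_mor = cpc_mor C, cpc_dom = cpc_dom C, cpc_cod = cpc_cod C, cpc_comp = cpc_comp C,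
   cpc_lel = cpc_lel C, cpc_ler = cpc_ler C, cpc_theta = cpc_theta C, cpc_delta = cpc_delta C,
   cpc_eps = cpc_eps C\<rparr>"
  by (cases C) simp

lemma Cs_eq: "is_drc S \<Longrightarrow> drcs.Cs (drc_carrier S) (drc_mult S) (drc_D S) (drc_R S) = drc2cpc S"
  using drcs.Cs_def[OF drcs_of] drc_eta by metis

lemma F_obj: "is_drc S \<Longrightarrow> is_cpc (drc2cpc S)"
  using drcs.is_cpc[OF drcs_of] Cs_eq by metis

lemma G_obj: "is_cpc C \<Longrightarrow> is_drc (cpc2drc C)"
  using ccpc.drc is_cpc_ccpc by blast

lemma GF: assumes S: "is_drc S" shows "cpc2drc (drc2cpc S) = S"
proof -
  interpret d: drcs "drc_carrier S" "drc_mult S" "drc_D S" "drc_R S" by (rule drcs_of[OF S])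
  have m: "(\<lambda>a b. if a \<in> drc_carrier S \<and> b \<in> drc_carrier S then cprod d.Cs a b else undefined) = drc_mult S"
    using d.cprod_Cs d.mout by (auto simp: fun_eq_iff)
  show ?thesis unfolding cpc2drc_def Cs_eq[OF S, symmetric] d.Cs_mor d.Cs_dom d.Cs_cod m
    by (rule drc_eta[symmetric])
qed


lemma cpc2drc_sel[simp]: "drc_carrier (cpc2drc C) = cpc_mor C" "drc_D (cpc2drc C) = cpc_dom C"
  "drc_R (cpc2drc C) = cpc_cod C"
  "drc_mult (cpc2drc C) = (\<lambda>a b. if a \<in> cpc_mor C \<and> b \<in> cpc_mor C then cprod C a b else undefined)"
  by (simp_all add: cpc2drc_def)

lemma lprod_in: "(\<And>a b. a\<in>A \<Longrightarrow> b\<in>A \<Longrightarrow> m a b \<in> A) \<Longrightarrow> xs \<noteq> [] \<Longrightarrow> set xs \<subseteq> A \<Longrightarrow> lprod m xs \<in> A"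
  by (induction m xs rule: lprod.induct) auto
lemma lprod_cong: "set xs \<subseteq> A \<Longrightarrow> (\<And>a b. a\<in>A \<Longrightarrow> b\<in>A \<Longrightarrow> m a b = m' a b) \<Longrightarrow>
  (\<And>a b. a\<in>A \<Longrightarrow> b\<in>A \<Longrightarrow> m a b \<in> A) \<Longrightarrow> lprod m xs = lprod m' xs"
proof (induction m xs rule: lprod.induct)
  case (3 m x y zs)
  have "lprod m (y # zs) \<in> A" using lprod_in[of A m "y # zs"] 3 by auto
  then show ?case using 3 by auto
qed auto

lemma FG: assumes C: "is_cpc C" shows "drc2cpc (cpc2drc C) = C"
proof -
  interpret c: ccpc C using is_cpc_ccpc[OF C] .
  have S: "is_drc (cpc2drc C)" using G_obj[OF C] .
  interpret d: drcs c.M "\<lambda>a b. if a \<in> c.M \<and> b \<in> c.M then cprod C a b else undefined" c.dm c.cd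
    using drcs_of[OF S] by simp
  have Cs: "drc2cpc (cpc2drc C) = d.Cs" using Cs_eq[OF S] by simp
  have PP: "d.PP = c.Ob" using d.PP_alt c.Ob_def' by simp
  have mm: "\<And>a b. a\<in>c.M \<Longrightarrow> b\<in>c.M \<Longrightarrow> (if a \<in> c.M \<and> b \<in> c.M then cprod C a b else undefined) = cprod C a b"
    by simp
  have le: "\<And>p q. p\<in>c.Ob \<Longrightarrow> q\<in>c.Ob \<Longrightarrow> d.le p q \<longleftrightarrow> c.TH q p = p"
    unfolding d.le_def using c.cprod_obj c.Ob_M by auto
  have comp: "cpc_comp d.Cs = c.cp"
  proof (intro ext)
    fix a b show "cpc_comp d.Cs a b = c.cp a b"
      using d.Cs_comp c.cprod_comp c.cp_out by auto
  qed
  have lel: "cpc_lel d.Cs = c.LL"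
  proof (intro ext)
    fix a b
    show "cpc_lel d.Cs a b = c.LL a b"
    proof
      assume h: "cpc_lel d.Cs a b"
      then have h': "a \<in> c.M" "b \<in> c.M" "a = cprod C (c.dm a) b" "d.le (c.dm a) (c.dm b)"
        unfolding d.Cs_lel using c.dmM by auto
      have l: "c.TH (c.dm b) (c.dm a) = c.dm a" using le[OF c.dm_Ob c.dm_Ob] h' by auto
      have "a = lres C (c.dm a) b" using h' c.cprod_lres[OF h'(2) c.dm_Ob[OF h'(1)] l] by simp
      then show "c.LL a b" using c.lres(1)[OF h'(2) c.dm_Ob[OF h'(1)] l] by simp
    next
      assume h: "c.LL a b"
      have ab: "a \<in> c.M" "b \<in> c.M" using c.LL_M h by auto
      have l: "c.TH (c.dm b) (c.dm a) = c.dm a" using c.LL_le_dm h by blast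
      have "cprod C (c.dm a) b = a" using c.cprod_lres[OF ab(2) c.dm_Ob[OF ab(1)] l] c.lres_uniq[OF h] by simp
      then show "cpc_lel d.Cs a b" unfolding d.Cs_lel using ab le[OF c.dm_Ob c.dm_Ob] l c.dmM by auto
    qed
  qed
  have ler: "cpc_ler d.Cs = c.LR"
  proof (intro ext)
    fix a b
    show "cpc_ler d.Cs a b = c.LR a b"
    proof
      assume h: "cpc_ler d.Cs a b"
      then have h': "a \<in> c.M" "b \<in> c.M" "a = cprod C b (c.cd a)" "d.le (c.cd a) (c.cd b)"
        unfolding d.Cs_ler using c.cdM by auto
      have l: "c.TH (c.cd b) (c.cd a) = c.cd a" using le[OF c.cd_Ob c.cd_Ob] h' by auto
      have "a = rres C b (c.cd a)" using h' c.cprod_rres[OF h'(2) c.cd_Ob[OF h'(1)] l] by simp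
      then show "c.LR a b" using c.rres(1)[OF h'(2) c.cd_Ob[OF h'(1)] l] by simp
    next
      assume h: "c.LR a b"
      have ab: "a \<in> c.M" "b \<in> c.M" using c.LR_M h by auto
      have l: "c.TH (c.cd b) (c.cd a) = c.cd a" using c.LR_le_cd h by blast
      have "cprod C b (c.cd a) = a" using c.cprod_rres[OF ab(2) c.cd_Ob[OF ab(1)] l] c.rres_uniq[OF h] by simp
      then show "cpc_ler d.Cs a b" unfolding d.Cs_ler using ab le[OF c.cd_Ob c.cd_Ob] l c.cdM by auto
    qed
  qed
  have th: "cpc_theta d.Cs = c.TH"
  proof (intro ext)
    fix p q show "cpc_theta d.Cs p q = c.TH p q"
      unfolding d.Cs_th d.TH'_def PP using c.cprod_obj(3) c.Ob_M c.TH_out by auto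
  qed
  have de: "cpc_delta d.Cs = c.DE"
  proof (intro ext)
    fix p q show "cpc_delta d.Cs p q = c.DE p q"
      unfolding d.Cs_de d.DE'_def PP using c.cprod_obj(2) c.Ob_M c.DE_out by auto
  qed
  have eps: "cpc_eps d.Cs = c.EP"
  proof (intro ext)
    fix xs
    have TD: "d.TH' = c.TH" "d.DE' = c.DE" using th de by simp_all
    show "cpc_eps d.Cs xs = c.EP xs"
    proof (cases "c.isp xs")
      case True
      have s: "set xs \<subseteq> c.M" using True c.Ob_M by (auto simp: is_path_def)
      have "lprod (\<lambda>a b. if a \<in> c.M \<and> b \<in> c.M then cprod C a b else undefined) xs = lprod (cprod C) xs"
        by (rule lprod_cong[OF s]) (simp_all add: c.pr_M)
      then show ?thesis unfolding d.Cs_eps PP TD using True c.lprod_EP by simp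
    next
      case False
      then show ?thesis unfolding d.Cs_eps PP TD using c.ep_out by simp
    qed
  qed
  show ?thesis unfolding Cs
    using th de by (intro cpc.equality) (simp_all add: comp lel ler eps)
qed


lemma F_hom: assumes S: "is_drc S" and T: "is_drc T" and f: "f \<in> drc_hom S T"
  shows "f \<in> cpc_hom (drc2cpc S) (drc2cpc T)"
proof -
  interpret a: drcs "drc_carrier S" "drc_mult S" "drc_D S" "drc_R S" by (rule drcs_of[OF S])
  interpret b: drcs "drc_carrier T" "drc_mult T" "drc_D T" "drc_R T" by (rule drcs_of[OF T])
  have CS: "drc2cpc S = a.Cs" using Cs_eq[OF S] by simp
  have CT: "drc2cpc T = b.Cs" using Cs_eq[OF T] by simp
  let ?A = "drc_carrier S" and ?B = "drc_carrier T"
  let ?m = "drc_mult S" and ?n = "drc_mult T"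
  have fE: "f \<in> ?A \<rightarrow>\<^sub>E ?B" using f by (simp add: drc_hom_def)
  have fA: "\<And>a. a\<in>?A \<Longrightarrow> f a \<in> ?B" using fE by auto
  have fm: "\<And>a b. a\<in>?A \<Longrightarrow> b\<in>?A \<Longrightarrow> f (?m a b) = ?n (f a) (f b)" using f by (simp add: drc_hom_def)
  have fD: "\<And>a. a\<in>?A \<Longrightarrow> f (drc_D S a) = drc_D T (f a)" using f by (simp add: drc_hom_def)
  have fR: "\<And>a. a\<in>?A \<Longrightarrow> f (drc_R S a) = drc_R T (f a)" using f by (simp add: drc_hom_def)
  have fP: "\<And>p. p\<in>a.PP \<Longrightarrow> f p \<in> b.PP"
  proof -
    fix p assume p: "p\<in>a.PP"
    have "drc_D T (f p) = f p" using fD[OF a.PP_A[OF p]] a.PP_D[OF p] by simp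
    then show "f p \<in> b.PP" unfolding b.PP_def using fA[OF a.PP_A[OF p]] by simp
  qed
  have fle: "\<And>p q. p\<in>a.PP \<Longrightarrow> q\<in>a.PP \<Longrightarrow> a.le p q \<Longrightarrow> b.le (f p) (f q)"
  proof -
    fix p q assume p: "p\<in>a.PP" and q: "q\<in>a.PP" and l: "a.le p q"
    have pq: "?m p q \<in> ?A" using a.mcl a.PP_A p q by blast
    have "f p = f (drc_R S (?m p q))" using l unfolding a.le_def by simp
    also have "\<dots> = drc_R T (f (?m p q))" using fR[OF pq] .
    also have "\<dots> = drc_R T (?n (f p) (f q))" using fm a.PP_A p q by simp
    finally show "b.le (f p) (f q)" unfolding b.le_def .
  qed
  have fTH: "\<And>p q. p\<in>a.PP \<Longrightarrow> q\<in>a.PP \<Longrightarrow> f (a.TH' p q) = b.TH' (f p) (f q)"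
    using fR fm fP a.PP_A a.mcl by simp
  have fDE: "\<And>p q. p\<in>a.PP \<Longrightarrow> q\<in>a.PP \<Longrightarrow> f (a.DE' p q) = b.DE' (f p) (f q)"
    using fD fm fP a.PP_A a.mcl by simp
  have flp: "\<And>xs. xs \<noteq> [] \<Longrightarrow> set xs \<subseteq> ?A \<Longrightarrow> lprod ?n (map f xs) = f (lprod ?m xs)"
  proof -
    fix xs :: "'a list" show "xs \<noteq> [] \<Longrightarrow> set xs \<subseteq> ?A \<Longrightarrow> lprod ?n (map f xs) = f (lprod ?m xs)"
    proof (induction xs rule: induct_list012)
      case (3 x y zs)
      have "lprod ?m (y # zs) \<in> ?A" using a.lprod_A 3 by simp
      then show ?case using 3 fm by simp
    qed auto
  qed
  show ?thesis unfolding CS CT cpc_hom_def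
  proof (intro CollectI conjI ballI allI impI)
    show "f \<in> cpc_mor a.Cs \<rightarrow>\<^sub>E cpc_mor b.Cs" using fE by simp
  next
    fix x assume "x \<in> cpc_mor a.Cs"
    then show "f (cpc_dom a.Cs x) = cpc_dom b.Cs (f x)" "f (cpc_cod a.Cs x) = cpc_cod b.Cs (f x)"
      using fD fR by auto
  next
    fix x y assume x: "x \<in> cpc_mor a.Cs" and y: "y \<in> cpc_mor a.Cs" and xy: "cpc_cod a.Cs x = cpc_dom a.Cs y"
    have xy0: "drc_R S x = drc_D S y" using xy by simp
    have xy': "drc_R T (f x) = drc_D T (f y)" using fR[of x] fD[of y] x y xy0 by simp
    have "f (cpc_comp a.Cs x y) = drc_mult T (f x) (f y)" using x y xy fm by simp
    then show "f (cpc_comp a.Cs x y) = cpc_comp b.Cs (f x) (f y)" using b.Cs_comp'[OF fA fA xy'] x y by simp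
  next
    fix x y assume "cpc_lel a.Cs x y"
    then have h: "x \<in> ?A" "y \<in> ?A" "x = ?m (drc_D S x) y" "a.le (drc_D S x) (drc_D S y)"
      unfolding a.Cs_lel by auto
    have 1: "f x = ?n (drc_D T (f x)) (f y)"
    proof -
      have "f x = f (?m (drc_D S x) y)" using h(3) by simp
      also have "\<dots> = ?n (f (drc_D S x)) (f y)" by (rule fm[OF a.Dcl[OF h(1)] h(2)])
      finally show ?thesis using fD h by simp
    qed
    have 2: "b.le (drc_D T (f x)) (drc_D T (f y))" using fle[OF a.D_PP a.D_PP h(4)] fD h by simp
    show "cpc_lel b.Cs (f x) (f y)" unfolding b.Cs_lel using 1 2 fA h by simp
  next
    fix x y assume "cpc_ler a.Cs x y"
    then have h: "x \<in> ?A" "y \<in> ?A" "x = ?m y (drc_R S x)" "a.le (drc_R S x) (drc_R S y)"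
      unfolding a.Cs_ler by auto
    have 1: "f x = ?n (f y) (drc_R T (f x))"
    proof -
      have "f x = f (?m y (drc_R S x))" using h(3) by simp
      also have "\<dots> = ?n (f y) (f (drc_R S x))" by (rule fm[OF h(2) a.Rcl[OF h(1)]])
      finally show ?thesis using fR h by simp
    qed
    have 2: "b.le (drc_R T (f x)) (drc_R T (f y))" using fle[OF a.R_PP a.R_PP h(4)] fR h by simp
    show "cpc_ler b.Cs (f x) (f y)" unfolding b.Cs_ler using 1 2 fA h by simp
  next
    show "f ` cpc_obj a.Cs \<subseteq> cpc_obj b.Cs" using fP by auto
  next
    fix p q assume "p \<in> cpc_obj a.Cs" "q \<in> cpc_obj a.Cs"
    then show "f (cpc_theta a.Cs p q) = cpc_theta b.Cs (f p) (f q)"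
      "f (cpc_delta a.Cs p q) = cpc_delta b.Cs (f p) (f q)" using fTH fDE by auto
  next
    fix xs assume p: "is_path (cpc_obj a.Cs) (cpc_theta a.Cs) (cpc_delta a.Cs) xs"
    then have pd: "a.pathd xs" using a.path_eq by simp
    have s: "xs \<noteq> []" "set xs \<subseteq> a.PP" using pd by (auto simp: is_path_def)
    have pd': "b.pathd (map f xs)"
    proof -
      have "successively (proj_F a.thd a.ded) xs" using pd by (simp add: is_path_def)
      then have "successively (proj_F b.thd b.ded) (map f xs)"
        unfolding successively_map
      proof (rule successively_mono)
        fix x y assume xy: "x \<in> set xs" "y \<in> set xs" and F: "proj_F a.thd a.ded x y"
        have xA: "x\<in>?A" "y\<in>?A" using xy s a.PP_A by auto
        have F': "x = drc_D S (?m x y)" "y = drc_R S (?m x y)" using F unfolding proj_F_def by auto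
        have xyA: "?m x y \<in> ?A" using a.mcl xA by blast
        have "f x = drc_D T (?n (f x) (f y))" using arg_cong[OF F'(1), of f] fD[OF xyA] fm xA by simp
        moreover have "f y = drc_R T (?n (f x) (f y))" using arg_cong[OF F'(2), of f] fR[OF xyA] fm xA by simp
        ultimately show "proj_F b.thd b.ded (f x) (f y)" unfolding proj_F_def by simp
      qed
      then show ?thesis using s fP by (auto simp: is_path_def)
    qed
    have sA: "set xs \<subseteq> ?A" using s a.PP_A by auto
    show "cpc_eps b.Cs (map f xs) = f (cpc_eps a.Cs xs)"
      using b.eps_path[OF pd'] a.eps_path[OF pd] flp[OF s(1) sA] by simp
  qed
qed

lemma G_hom: assumes C: "is_cpc C" and C': "is_cpc C'" and h: "\<phi> \<in> cpc_hom C C'"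
  shows "\<phi> \<in> drc_hom (cpc2drc C) (cpc2drc C')"
proof -
  interpret c: ccpc C using is_cpc_ccpc[OF C] .
  interpret c': ccpc C' using is_cpc_ccpc[OF C'] .
  have E: "\<phi> \<in> c.M \<rightarrow>\<^sub>E c'.M" using h by (simp add: cpc_hom_def)
  have DR: "\<And>a. a\<in>c.M \<Longrightarrow> \<phi> (c.dm a) = c'.dm (\<phi> a) \<and> \<phi> (c.cd a) = c'.cd (\<phi> a)"
    using h by (simp add: cpc_hom_def)
  have pc': "pcpc C'" using is_cpc_pcpc[OF C'] .
  show ?thesis unfolding drc_hom_def cpc2drc_sel
  proof (intro CollectI conjI ballI)
    show "\<phi> \<in> c.M \<rightarrow>\<^sub>E c'.M" using E .
  next
    fix a b assume a: "a\<in>c.M" and b: "b\<in>c.M"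
    have "\<phi> a \<in> c'.M" "\<phi> b \<in> c'.M" using E a b by auto
    then show "\<phi> (if a \<in> c.M \<and> b \<in> c.M then cprod C a b else undefined) =
        (if \<phi> a \<in> c'.M \<and> \<phi> b \<in> c'.M then cprod C' (\<phi> a) (\<phi> b) else undefined)"
      using a b c.hom_cprod[OF h pc' a b] by simp
  next
    fix a assume "a\<in>c.M"
    then show "\<phi> (c.dm a) = c'.dm (\<phi> a)" "\<phi> (c.cd a) = c'.cd (\<phi> a)" using DR by auto
  qed
qed

theorem theorem7p1:
  shows "isomorphic_categories
           (is_drc :: 'a drc \<Rightarrow> bool) drc_hom drc_id drc_comp
           (is_cpc :: 'a cpc \<Rightarrow> bool) cpc_hom cpc_id cpc_fcomp"
proof -
  have F: "is_functor (is_drc :: 'a drc \<Rightarrow> bool) drc_hom drc_id drc_comp is_cpc cpc_hom cpc_id cpc_fcomp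
      drc2cpc (\<lambda>S T f. f)"
    unfolding is_functor_def
  proof (intro conjI allI impI)
    fix X :: "'a drc" assume "is_drc X" then show "is_cpc (drc2cpc X)" by (rule F_obj)
  next
    fix X Y :: "'a drc" and f assume "is_drc X \<and> is_drc Y \<and> f \<in> drc_hom X Y"
    then show "f \<in> cpc_hom (drc2cpc X) (drc2cpc Y)" using F_hom by blast
  next
    fix X :: "'a drc" assume X: "is_drc X"
    interpret a: drcs "drc_carrier X" "drc_mult X" "drc_D X" "drc_R X" by (rule drcs_of[OF X])
    show "drc_id X = cpc_id (drc2cpc X)" unfolding drc_id_def cpc_id_def Cs_eq[OF X, symmetric] by simp
  next
    fix X Y Z :: "'a drc" and f g assume h: "is_drc X \<and> is_drc Y \<and> is_drc Z \<and> f \<in> drc_hom X Y \<and> g \<in> drc_hom Y Z"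
    interpret a: drcs "drc_carrier X" "drc_mult X" "drc_D X" "drc_R X" using drcs_of h by blast
    show "drc_comp X Y Z g f = cpc_fcomp (drc2cpc X) (drc2cpc Y) (drc2cpc Z) g f"
      unfolding drc_comp_def cpc_fcomp_def using Cs_eq h by (metis a.Cs_mor)
  qed
  have G: "is_functor (is_cpc :: 'a cpc \<Rightarrow> bool) cpc_hom cpc_id cpc_fcomp is_drc drc_hom drc_id drc_comp
      cpc2drc (\<lambda>S T f. f)"
    unfolding is_functor_def
  proof (intro conjI allI impI)
    fix X :: "'a cpc" assume "is_cpc X" then show "is_drc (cpc2drc X)" by (rule G_obj)
  next
    fix X Y :: "'a cpc" and f assume "is_cpc X \<and> is_cpc Y \<and> f \<in> cpc_hom X Y"
    then show "f \<in> drc_hom (cpc2drc X) (cpc2drc Y)" using G_hom by blast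
  next
    fix X :: "'a cpc" assume X: "is_cpc X"
    show "cpc_id X = drc_id (cpc2drc X)" unfolding drc_id_def cpc_id_def by simp
  next
    fix X Y Z :: "'a cpc" and f g
    show "cpc_fcomp X Y Z g f = drc_comp (cpc2drc X) (cpc2drc Y) (cpc2drc Z) g f"
      unfolding drc_comp_def cpc_fcomp_def by simp
  qed
  have GF': "\<forall>X :: 'a drc. is_drc X \<longrightarrow> cpc2drc (drc2cpc X) = X" using GF by blast
  have FG': "\<forall>X :: 'a cpc. is_cpc X \<longrightarrow> drc2cpc (cpc2drc X) = X" using FG by blast
  show ?thesis unfolding isomorphic_categories_def
    by (rule exI[of _ drc2cpc], rule exI[of _ "\<lambda>S T f. f"], rule exI[of _ cpc2drc],
        rule exI[of _ "\<lambda>S T f. f"]) (simp add: F G GF' FG')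
qed


end
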